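(* Consider the setting described in the context. The following statements are equivalent. (i) There exists a linear feedback equilibrium strategy of Problem (LQ). (ii) There exists $\Phi=\{\Phi_0,\dots,\Phi_{N-1}\}$ with $\Phi_t\in\mathbb{R}^{m\times n}$ such that for any initial pair $(t,x)\in\mathbb{T}\times\mathbb{R}^n$ and any $k\in\mathbb{T}_t$, the forward-backward stochastic difference equation $$\begin{cases}X^{k,\Phi}_{\ell+1}=(A_{k,\ell}+B_{k,\ell}\Phi_\ell)X^{k,\Phi}_\ell+(C_{k,\ell}+D_{k,\ell}\Phi_\ell)X^{k,\Phi}_\ell w_\ell,\\ Z^{k,\Phi}_\ell=(A_{k,\ell}+B_{k,\ell}\Phi_\ell)^T\mathbb{E}(Z^{k,\Phi}_{\ell+1}\mid\mathcal{F}_{\ell-1})+(C_{k,\ell}+D_{k,\ell}\Phi_\ell)^T\mathbb{E}(Z^{k,\Phi}_{\ell+1}w_\ell\mid\mathcal{F}_{\ell-1})+(\Phi_\ell^TR_{k,\ell}\Phi_\ell+Q_{k,\ell})X^{k,\Phi}_\ell,\\ X^{k,\Phi}_k=X^{t,x,*}_k,\quad Z^{k,\Phi}_N=G_kX^{k,\Phi}_N,\quad \ell\in\mathbb{T}_k\end{cases}$$ has a solution $(X^{k,\Phi},Z^{k,\Phi})$ satisfying the stationary condition $$0=R_{k,k}\Phi_kX^{k,\Phi}_k+B_{k,k}^T\mathbb{E}(Z^{k,\Phi}_{k+1}\mid\mathcal{F}_{k-1})+D_{k,k}^T\mathbb{E}(Z^{k,\Phi}_{k+1}w_k\mid\mathcal{F}_{k-1}),$$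 and the convexity condition $$\inf_{\bar u_k\in L^2_{\mathcal{F}}(k;\mathbb{R}^m)}\Big\{\mathbb{E}[\bar u_k^TR_{k,k}\bar u_k]+\sum_{\ell=k}^{N-1}\mathbb{E}\big[(Y^{k,\bar u_k,\Phi}_\ell)^T(Q_{k,\ell}+\Phi_\ell^TR_{k,\ell}\Phi_\ell)Y^{k,\bar u_k,\Phi}_\ell\big]+\mathbb{E}\big[(Y^{k,\bar u_k,\Phi}_N)^TG_kY^{k,\bar u_k,\Phi}_N\big]\Big\}\ge0$$ holds. Here $X^{t,x,*}_{k+1}=(A_{k,k}+B_{k,k}\Phi_k)X^{t,x,*}_k+(C_{k,k}+D_{k,k}\Phi_k)X^{t,x,*}_kw_k$, $X^{t,x,*}_t=x$, and $Y^{k,\bar u_k,\Phi}$ is given by $Y^{k,\bar u_k,\Phi}_k=0$, $Y^{k,\bar u_k,\Phi}_{k+1}=B_{k,k}\bar u_k+D_{k,k}\bar u_kw_k$, and $Y^{k,\bar u_k,\Phi}_{\ell+1}=(A_{k,\ell}+B_{k,\ell}\Phi_\ell)Y^{k,\bar u_k,\Phi}_\ell+(C_{k,\ell}+D_{k,\ell}\Phi_\ell)Y^{k,\bar u_k,\Phi}_\ell w_\ell$ for $\ell\in\mathbb{T}_{k+1}$.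
   Context: Let $N$ be a positive integer, $\mathbb{T}=\{0,1,\dots,N-1\}$, $\mathbb{T}_t=\{t,\dots,N-1\}$. On a probability space $(\Omega,\mathcal{F},P)$, $\{w_k\}$ is a scalar martingale difference sequence with $\mathbb{E}[w_{k+1}\mid\mathcal{F}_k]=0$ and $\mathbb{E}[w_{k+1}^2\mid\mathcal{F}_k]=1$ for $k\ge0$, where $\mathcal{F}_k=\sigma\{x_0,w_l,\ l=0,\dots,k\}$ and $\mathcal{F}_{-1}=\{\emptyset,\Omega\}$. $L^2_{\mathcal{F}}(\mathbb{T}_t;\mathbb{R}^m)$ is the set of $\mathbb{R}^m$-valued processes $\{\nu_k,k\in\mathbb{T}_t\}$ with each $\nu_k$ $\mathcal{F}_{k-1}$-measurable and $\sum_k\mathbb{E}|\nu_k|^2<\infty$; $L^2_{\mathcal{F}}(k;\mathcal{H})$ is the set of square-integrable $\mathcal{F}_{k-1}$-measurable $\mathcal{H}$-valued random variables. For each $t\in\mathbb{T}$, $k\in\mathbb{T}_t$, let $A_{t,k},C_{t,k}\in\mathbb{R}^{n\times n}$, $B_{t,k},D_{t,k}\in\mathbb{R}^{n\times m}$ be deterministic and $Q_{t,k}\in\mathbb{R}^{n\times n}$, $R_{t,k}\in\mathbb{R}^{m\times m}$, $G_t\in\mathbb{R}^{n\times n}$ deterministic symmetric (no definiteness assumed). For $t\in\mathbb{T}$, $y\in L^2_{\mathcal{F}}(t;\mathbb{R}^n)$, $u\in L^2_{\mathcal{F}}(\mathbb{T}_t;\mathbb{R}^m)$, the state $X^t$ solves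 $X^t_{k+1}=A_{t,k}X^t_k+B_{t,k}u_k+(C_{t,k}X^t_k+D_{t,k}u_k)w_k$, $X^t_t=y$, and $J(t,y;u)=\sum_{k=t}^{N-1}\mathbb{E}[(X^t_k)^TQ_{t,k}X^t_k+u_k^TR_{t,k}u_k]+\mathbb{E}[(X^t_N)^TG_tX^t_N]$ (Problem (LQ) is to minimize it). $\Phi=\{\Phi_0,\dots,\Phi_{N-1}\}$, $\Phi_t\in\mathbb{R}^{m\times n}$, is a linear feedback equilibrium strategy of Problem (LQ) if for every $(t,x)\in\mathbb{T}\times\mathbb{R}^n$, $k\in\mathbb{T}_t$ and $u_k\in L^2_{\mathcal{F}}(k;\mathbb{R}^m)$, $$J\big(k,X^{t,x,*}_k;(\Phi_\ell X^{k,\Phi}_\ell)_{\ell\in\mathbb{T}_k}\big)\le J\big(k,X^{t,x,*}_k;(u_k,(\Phi_\ell X^{k,u_k,\Phi}_\ell)_{\ell\in\mathbb{T}_{k+1}})\big),$$ where $X^{t,x,*}_{k+1}=(A_{k,k}+B_{k,k}\Phi_k)X^{t,x,*}_k+(C_{k,k}+D_{k,k}\Phi_k)X^{t,x,*}_kw_k$, $X^{t,x,*}_t=x$; $X^{k,\Phi}_{\ell+1}=(A_{k,\ell}+B_{k,\ell}\Phi_\ell)X^{k,\Phi}_\ell+(C_{k,\ell}+D_{k,\ell}\Phi_\ell)X^{k,\Phi}_\ell w_\ell$ ($\ell\in\mathbb{T}_k$), $X^{k,\Phi}_k=X^{t,x,*}_k$; and $X^{k,u_k,\Phi}_k=X^{t,x,*}_k$,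 $X^{k,u_k,\Phi}_{k+1}=A_{k,k}X^{k,u_k,\Phi}_k+B_{k,k}u_k+(C_{k,k}X^{k,u_k,\Phi}_k+D_{k,k}u_k)w_k$, $X^{k,u_k,\Phi}_{\ell+1}=(A_{k,\ell}+B_{k,\ell}\Phi_\ell)X^{k,u_k,\Phi}_\ell+(C_{k,\ell}+D_{k,\ell}\Phi_\ell)X^{k,u_k,\Phi}_\ell w_\ell$ for $\ell\in\mathbb{T}_{k+1}$. *)

theory Defs
  imports "HOL-Probability.Probability"
begin

(* Conventions:
   - time indices are natural numbers; T = {0..<N}, T_t = {t..<N}.
   - Fp M x0 w k is the sigma-algebra F_(k-1) of the paper:
       Fp .. 0 = {{}, Omega} (= F_(-1)),  Fp .. (Suc j) = sigma{x0, w_0, ..., w_j} (= F_j).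
   - n x n matrices: real^'n^'n, n x m matrices: real^'m^'n, m x n matrices: real^'n^'m.
   - E[.] is the Bochner integral w.r.t. M; conditional expectations are real_cond_exp
     applied componentwise. *)

definition Fp :: "'w measure \<Rightarrow> ('w \<Rightarrow> real^'n) \<Rightarrow> (nat \<Rightarrow> 'w \<Rightarrow> real) \<Rightarrow> nat \<Rightarrow> 'w measure" where
  "Fp M x0 w k = sigma (space M)
     ((if k = 0 then {} else {x0 -` B \<inter> space M | B. B \<in> sets borel})
      \<union> (\<Union>l<k. {w l -` B \<inter> space M | B. B \<in> sets borel}))"

definition L2F :: "'w measure \<Rightarrow> ('w \<Rightarrow> real^'n) \<Rightarrow> (nat \<Rightarrow> 'w \<Rightarrow> real) \<Rightarrow> nat \<Rightarrow> ('w \<Rightarrow> real^'m) \<Rightarrow> bool" where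
  "L2F M x0 w k v \<longleftrightarrow> v \<in> borel_measurable (Fp M x0 w k) \<and> integrable M (\<lambda>\<omega>. (norm (v \<omega>))\<^sup>2)"

definition vcond_exp :: "'w measure \<Rightarrow> 'w measure \<Rightarrow> ('w \<Rightarrow> real^'n) \<Rightarrow> 'w \<Rightarrow> real^'n" where
  "vcond_exp M F Z = (\<lambda>\<omega>. \<chi> i. real_cond_exp M F (\<lambda>\<eta>. Z \<eta> $ i) \<omega>)"

definition qf :: "real^'a^'a \<Rightarrow> real^'a \<Rightarrow> real" where
  "qf P x = x \<bullet> (P *v x)"

primrec ol_state :: "(nat \<Rightarrow> nat \<Rightarrow> real^'n^'n) \<Rightarrow> (nat \<Rightarrow> nat \<Rightarrow> real^'m^'n) \<Rightarrow>
    (nat \<Rightarrow> nat \<Rightarrow> real^'n^'n) \<Rightarrow> (nat \<Rightarrow> nat \<Rightarrow> real^'m^'n) \<Rightarrow> (nat \<Rightarrow> 'w \<Rightarrow> real) \<Rightarrow>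
    nat \<Rightarrow> ('w \<Rightarrow> real^'n) \<Rightarrow> (nat \<Rightarrow> 'w \<Rightarrow> real^'m) \<Rightarrow> nat \<Rightarrow> 'w \<Rightarrow> real^'n" where
  "ol_state A B C D w t y u 0 = y"
| "ol_state A B C D w t y u (Suc j) = (\<lambda>\<omega>. if j < t then y \<omega> else
      A t j *v ol_state A B C D w t y u j \<omega> + B t j *v u j \<omega>
      + w j \<omega> *\<^sub>R (C t j *v ol_state A B C D w t y u j \<omega> + D t j *v u j \<omega>))"

definition lq_cost :: "'w measure \<Rightarrow> nat \<Rightarrow> (nat \<Rightarrow> nat \<Rightarrow> real^'n^'n) \<Rightarrow> (nat \<Rightarrow> nat \<Rightarrow> real^'m^'n) \<Rightarrow>
    (nat \<Rightarrow> nat \<Rightarrow> real^'n^'n) \<Rightarrow> (nat \<Rightarrow> nat \<Rightarrow> real^'m^'n) \<Rightarrow>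
    (nat \<Rightarrow> nat \<Rightarrow> real^'n^'n) \<Rightarrow> (nat \<Rightarrow> nat \<Rightarrow> real^'m^'m) \<Rightarrow> (nat \<Rightarrow> real^'n^'n) \<Rightarrow>
    (nat \<Rightarrow> 'w \<Rightarrow> real) \<Rightarrow> nat \<Rightarrow> ('w \<Rightarrow> real^'n) \<Rightarrow> (nat \<Rightarrow> 'w \<Rightarrow> real^'m) \<Rightarrow> real" where
  "lq_cost M N A B C D Q R G w t y u =
     (\<Sum>k=t..<N. \<integral>\<omega>. qf (Q t k) (ol_state A B C D w t y u k \<omega>) + qf (R t k) (u k \<omega>) \<partial>M)
     + (\<integral>\<omega>. qf (G t) (ol_state A B C D w t y u N \<omega>) \<partial>M)"

primrec eq_state :: "(nat \<Rightarrow> nat \<Rightarrow> real^'n^'n) \<Rightarrow> (nat \<Rightarrow> nat \<Rightarrow> real^'m^'n) \<Rightarrow>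
    (nat \<Rightarrow> nat \<Rightarrow> real^'n^'n) \<Rightarrow> (nat \<Rightarrow> nat \<Rightarrow> real^'m^'n) \<Rightarrow> (nat \<Rightarrow> 'w \<Rightarrow> real) \<Rightarrow>
    (nat \<Rightarrow> real^'n^'m) \<Rightarrow> nat \<Rightarrow> real^'n \<Rightarrow> nat \<Rightarrow> 'w \<Rightarrow> real^'n" where
  "eq_state A B C D w \<Phi> t x 0 = (\<lambda>\<omega>. x)"
| "eq_state A B C D w \<Phi> t x (Suc j) = (\<lambda>\<omega>. if j < t then x else
      (A j j + B j j ** \<Phi> j) *v eq_state A B C D w \<Phi> t x j \<omega>
      + w j \<omega> *\<^sub>R ((C j j + D j j ** \<Phi> j) *v eq_state A B C D w \<Phi> t x j \<omega>))"

text \<open>With v = Phi_k y this is X^{k,Phi};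
  with general v it is X^{k,v,Phi}; with y = 0 and v = u-bar it is Y^{k,u-bar,Phi}.\<close>
primrec cl_state :: "(nat \<Rightarrow> nat \<Rightarrow> real^'n^'n) \<Rightarrow> (nat \<Rightarrow> nat \<Rightarrow> real^'m^'n) \<Rightarrow>
    (nat \<Rightarrow> nat \<Rightarrow> real^'n^'n) \<Rightarrow> (nat \<Rightarrow> nat \<Rightarrow> real^'m^'n) \<Rightarrow> (nat \<Rightarrow> 'w \<Rightarrow> real) \<Rightarrow>
    (nat \<Rightarrow> real^'n^'m) \<Rightarrow> nat \<Rightarrow> ('w \<Rightarrow> real^'n) \<Rightarrow> ('w \<Rightarrow> real^'m) \<Rightarrow> nat \<Rightarrow> 'w \<Rightarrow> real^'n" where
  "cl_state A B C D w \<Phi> k y v 0 = y"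
| "cl_state A B C D w \<Phi> k y v (Suc j) = (\<lambda>\<omega>. if j < k then y \<omega>
      else if j = k then A k k *v y \<omega> + B k k *v v \<omega> + w k \<omega> *\<^sub>R (C k k *v y \<omega> + D k k *v v \<omega>)
      else (A k j + B k j ** \<Phi> j) *v cl_state A B C D w \<Phi> k y v j \<omega>
        + w j \<omega> *\<^sub>R ((C k j + D k j ** \<Phi> j) *v cl_state A B C D w \<Phi> k y v j \<omega>))"

definition fb_control :: "(nat \<Rightarrow> real^'n^'m) \<Rightarrow> nat \<Rightarrow> ('w \<Rightarrow> real^'m) \<Rightarrow> (nat \<Rightarrow> 'w \<Rightarrow> real^'n) \<Rightarrow> nat \<Rightarrow> 'w \<Rightarrow> real^'m" where
  "fb_control \<Phi> k v X l = (if l = k then v else (\<lambda>\<omega>. \<Phi> l *v X l \<omega>))"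

definition is_lfes :: "'w measure \<Rightarrow> ('w \<Rightarrow> real^'n) \<Rightarrow> (nat \<Rightarrow> 'w \<Rightarrow> real) \<Rightarrow> nat \<Rightarrow>
    (nat \<Rightarrow> nat \<Rightarrow> real^'n^'n) \<Rightarrow> (nat \<Rightarrow> nat \<Rightarrow> real^'m^'n) \<Rightarrow>
    (nat \<Rightarrow> nat \<Rightarrow> real^'n^'n) \<Rightarrow> (nat \<Rightarrow> nat \<Rightarrow> real^'m^'n) \<Rightarrow>
    (nat \<Rightarrow> nat \<Rightarrow> real^'n^'n) \<Rightarrow> (nat \<Rightarrow> nat \<Rightarrow> real^'m^'m) \<Rightarrow> (nat \<Rightarrow> real^'n^'n) \<Rightarrow>
    (nat \<Rightarrow> real^'n^'m) \<Rightarrow> bool" where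
  "is_lfes M x0 w N A B C D Q R G \<Phi> \<longleftrightarrow>
    (\<forall>t<N. \<forall>x. \<forall>k\<in>{t..<N}. \<forall>v. L2F M x0 w k v \<longrightarrow>
      (let Xs = eq_state A B C D w \<Phi> t x k;
           v0 = (\<lambda>\<omega>. \<Phi> k *v Xs \<omega>)
       in lq_cost M N A B C D Q R G w k Xs (fb_control \<Phi> k v0 (cl_state A B C D w \<Phi> k Xs v0))
          \<le> lq_cost M N A B C D Q R G w k Xs (fb_control \<Phi> k v (cl_state A B C D w \<Phi> k Xs v))))"

definition fbsde_sol :: "'w measure \<Rightarrow> ('w \<Rightarrow> real^'n) \<Rightarrow> (nat \<Rightarrow> 'w \<Rightarrow> real) \<Rightarrow> nat \<Rightarrow>
    (nat \<Rightarrow> nat \<Rightarrow> real^'n^'n) \<Rightarrow> (nat \<Rightarrow> nat \<Rightarrow> real^'m^'n) \<Rightarrow>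
    (nat \<Rightarrow> nat \<Rightarrow> real^'n^'n) \<Rightarrow> (nat \<Rightarrow> nat \<Rightarrow> real^'m^'n) \<Rightarrow>
    (nat \<Rightarrow> nat \<Rightarrow> real^'n^'n) \<Rightarrow> (nat \<Rightarrow> nat \<Rightarrow> real^'m^'m) \<Rightarrow> (nat \<Rightarrow> real^'n^'n) \<Rightarrow>
    (nat \<Rightarrow> real^'n^'m) \<Rightarrow> nat \<Rightarrow> ('w \<Rightarrow> real^'n) \<Rightarrow> (nat \<Rightarrow> 'w \<Rightarrow> real^'n) \<Rightarrow> (nat \<Rightarrow> 'w \<Rightarrow> real^'n) \<Rightarrow> bool" where
  "fbsde_sol M x0 w N A B C D Q R G \<Phi> k Xs X Z \<longleftrightarrow>
    (\<forall>l\<in>{k..N}. X l \<in> borel_measurable M \<and> Z l \<in> borel_measurable M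
        \<and> integrable M (\<lambda>\<omega>. (norm (X l \<omega>))\<^sup>2) \<and> integrable M (\<lambda>\<omega>. (norm (Z l \<omega>))\<^sup>2))
    \<and> (AE \<omega> in M. X k \<omega> = Xs \<omega>)
    \<and> (\<forall>l\<in>{k..<N}. AE \<omega> in M. X (Suc l) \<omega> =
          (A k l + B k l ** \<Phi> l) *v X l \<omega> + w l \<omega> *\<^sub>R ((C k l + D k l ** \<Phi> l) *v X l \<omega>))
    \<and> (\<forall>l\<in>{k..<N}. AE \<omega> in M. Z l \<omega> =
          transpose (A k l + B k l ** \<Phi> l) *v vcond_exp M (Fp M x0 w l) (Z (Suc l)) \<omega>
          + transpose (C k l + D k l ** \<Phi> l) *v vcond_exp M (Fp M x0 w l) (\<lambda>\<eta>. w l \<eta> *\<^sub>R Z (Suc l) \<eta>) \<omega>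
          + (transpose (\<Phi> l) ** R k l ** \<Phi> l + Q k l) *v X l \<omega>)
    \<and> (AE \<omega> in M. Z N \<omega> = G k *v X N \<omega>)"

definition cond_ii :: "'w measure \<Rightarrow> ('w \<Rightarrow> real^'n) \<Rightarrow> (nat \<Rightarrow> 'w \<Rightarrow> real) \<Rightarrow> nat \<Rightarrow>
    (nat \<Rightarrow> nat \<Rightarrow> real^'n^'n) \<Rightarrow> (nat \<Rightarrow> nat \<Rightarrow> real^'m^'n) \<Rightarrow>
    (nat \<Rightarrow> nat \<Rightarrow> real^'n^'n) \<Rightarrow> (nat \<Rightarrow> nat \<Rightarrow> real^'m^'n) \<Rightarrow>
    (nat \<Rightarrow> nat \<Rightarrow> real^'n^'n) \<Rightarrow> (nat \<Rightarrow> nat \<Rightarrow> real^'m^'m) \<Rightarrow> (nat \<Rightarrow> real^'n^'n) \<Rightarrow>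
    (nat \<Rightarrow> real^'n^'m) \<Rightarrow> bool" where
  "cond_ii M x0 w N A B C D Q R G \<Phi> \<longleftrightarrow>
    (\<forall>t<N. \<forall>x. \<forall>k\<in>{t..<N}.
      (\<exists>X Z. fbsde_sol M x0 w N A B C D Q R G \<Phi> k (eq_state A B C D w \<Phi> t x k) X Z
         \<and> (AE \<omega> in M. 0 = R k k *v (\<Phi> k *v X k \<omega>)
              + transpose (B k k) *v vcond_exp M (Fp M x0 w k) (Z (Suc k)) \<omega>
              + transpose (D k k) *v vcond_exp M (Fp M x0 w k) (\<lambda>\<eta>. w k \<eta> *\<^sub>R Z (Suc k) \<eta>) \<omega>))
      \<and> (INF ub \<in> {u. L2F M x0 w k u}.
           ereal ((\<integral>\<omega>. qf (R k k) (ub \<omega>) \<partial>M)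
             + (\<Sum>l=k..<N. \<integral>\<omega>. qf (Q k l + transpose (\<Phi> l) ** R k l ** \<Phi> l)
                                   (cl_state A B C D w \<Phi> k (\<lambda>\<omega>. 0) ub l \<omega>) \<partial>M)
             + (\<integral>\<omega>. qf (G k) (cl_state A B C D w \<Phi> k (\<lambda>\<omega>. 0) ub N \<omega>) \<partial>M))) \<ge> 0)"

end

theory Submission
  imports Defs
begin


lemma vec_comp_meas: "f \<in> borel_measurable F \<Longrightarrow> (\<lambda>x. (f x::real^'n) $ i) \<in> borel_measurable F"
proof -
  assume "f \<in> borel_measurable F"
  then have "(\<lambda>x. f x \<bullet> axis i 1) \<in> borel_measurable F" by measurable
  then show ?thesis by (simp add: inner_axis)
qed

lemma vec_meas_comps: "(\<And>i. (\<lambda>x. (f x::real^'n) $ i) \<in> borel_measurable F) \<Longrightarrow> f \<in> borel_measurable F"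
  unfolding borel_measurable_euclidean_space[where f=f]
  by (auto simp: Basis_vec_def inner_axis)

lemma mat_meas: "f \<in> borel_measurable F \<Longrightarrow> (\<lambda>x. (P::real^'n^'m) *v f x) \<in> borel_measurable F"
  by (rule measurable_compose[OF _ borel_measurable_continuous_onI])
     (auto intro: linear_continuous_on matrix_vector_mul_linear simp: linear_conv_bounded_linear[symmetric])

locale lqs = prob_space M for M :: "'w measure" +
  fixes x0 :: "'w \<Rightarrow> real^'n" and w :: "nat \<Rightarrow> 'w \<Rightarrow> real"
  assumes x0m[measurable]: "x0 \<in> borel_measurable M"
    and wm[measurable]: "\<And>k. w k \<in> borel_measurable M"
    and w2i: "\<And>k. integrable M (\<lambda>\<omega>. (w k \<omega>)\<^sup>2)"
    and w0: "\<And>k. AE \<omega> in M. real_cond_exp M (Fp M x0 w k) (w k) \<omega> = 0"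
    and w1: "\<And>k. AE \<omega> in M. real_cond_exp M (Fp M x0 w k) (\<lambda>\<eta>. (w k \<eta>)\<^sup>2) \<omega> = 1"
begin

abbreviation F where "F k \<equiv> Fp M x0 w k"

definition gens :: "nat \<Rightarrow> 'w set set" where
  "gens k = ((if k = 0 then {} else {x0 -` B \<inter> space M | B. B \<in> sets borel})
      \<union> (\<Union>l<k. {w l -` B \<inter> space M | B. B \<in> sets borel}))"

lemma gens_pow: "gens k \<subseteq> Pow (space M)"
  unfolding gens_def by auto

lemma gens_sets: "gens k \<subseteq> sets M"
  unfolding gens_def by (auto simp: measurable_sets)

lemma F_space[simp]: "space (F k) = space M"
  unfolding Fp_def by (simp add: space_measure_of_conv)

lemma F_sets_eq: "sets (F k) = sigma_sets (space M) (gens k)"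
  unfolding Fp_def gens_def[symmetric] using gens_pow by (simp add: sets_measure_of)

lemma F_sets: "sets (F k) \<subseteq> sets M"
  unfolding F_sets_eq using gens_sets by (rule sets.sigma_sets_subset)

lemma subalg: "subalgebra M (F k)"
  unfolding subalgebra_def using F_sets by simp

lemma sfs: "sigma_finite_subalgebra M (F k)"
  by (rule finite_measure_subalgebra_is_sigma_finite)
     (simp add: finite_measure_subalgebra_def finite_measure_subalgebra_axioms_def subalg finite_measure_axioms)

lemma F_mono_sets: "j \<le> l \<Longrightarrow> sets (F j) \<subseteq> sets (F l)"
proof -
  assume "j \<le> l"
  then have "gens j \<subseteq> gens l" unfolding gens_def by (intro Un_mono UN_mono) auto
  then show ?thesis unfolding F_sets_eq by (rule sigma_sets_mono')
qed

lemma F_mono: "j \<le> l \<Longrightarrow> f \<in> borel_measurable (F j) \<Longrightarrow> f \<in> borel_measurable (F l)"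
  using measurable_mono[of borel borel "F j" "F l"] F_mono_sets by auto

lemma FM: "f \<in> borel_measurable (F j) \<Longrightarrow> f \<in> borel_measurable M"
  using measurable_from_subalg[OF subalg] by blast

lemma w_F: "w l \<in> borel_measurable (F (Suc l))"
proof -
  have "w l \<in> measurable (F (Suc l)) borel"
    unfolding measurable_def
  proof safe
    fix B :: "real set" assume "B \<in> sets borel"
    then have "w l -` B \<inter> space M \<in> gens (Suc l)" unfolding gens_def by blast
    then show "w l -` B \<inter> space (F (Suc l)) \<in> sets (F (Suc l))" unfolding F_sets_eq by auto
  qed auto
  then show ?thesis .
qed


lemma nn_w2: "AE \<omega> in M. nn_cond_exp M (F l) (\<lambda>\<eta>. ennreal ((w l \<eta>)\<^sup>2)) \<omega> = 1"
proof -
  interpret S: sigma_finite_subalgebra M "F l" by (rule sfs)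
  let ?g = "\<lambda>\<eta>. (w l \<eta>)\<^sup>2"
  have gm[measurable]: "?g \<in> borel_measurable M" by measurable
  have z: "AE \<omega> in M. (\<lambda>_. 0::ennreal) \<omega> = nn_cond_exp M (F l) (\<lambda>_. 0) \<omega>"
    by (rule S.nn_cond_exp_F_meas) simp
  have e0: "(\<lambda>x. ennreal (- ?g x)) = (\<lambda>_. 0)"
    by (rule ext) (simp add: ennreal_neg)
  have "(\<integral>\<^sup>+ x. 1 * nn_cond_exp M (F l) (\<lambda>\<eta>. ennreal (?g \<eta>)) x \<partial>M) = (\<integral>\<^sup>+ x. 1 * ennreal (?g x) \<partial>M)"
    by (rule S.nn_cond_exp_intg) auto
  also have "\<dots> = ennreal (\<integral> x. ?g x \<partial>M)"
    using w2i by (simp add: nn_integral_eq_integral)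
  finally have "integral\<^sup>N M (nn_cond_exp M (F l) (\<lambda>\<eta>. ennreal (?g \<eta>))) \<noteq> \<infinity>" by simp
  then have fin: "AE x in M. nn_cond_exp M (F l) (\<lambda>\<eta>. ennreal (?g \<eta>)) x \<noteq> \<infinity>"
    by (intro nn_integral_noteq_infinite) auto
  show ?thesis using z fin w1[of l]
  proof eventually_elim
    case (elim x)
    have a: "enn2real (nn_cond_exp M (F l) (\<lambda>\<eta>. ennreal (?g \<eta>)) x) = 1"
      using elim(3) unfolding real_cond_exp_def e0 elim(1)[symmetric] by simp
    have "ennreal (enn2real (nn_cond_exp M (F l) (\<lambda>\<eta>. ennreal (?g \<eta>)) x)) = nn_cond_exp M (F l) (\<lambda>\<eta>. ennreal (?g \<eta>)) x"
      using elim(2) by (simp add: ennreal_enn2real_if infinity_ennreal_def)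
    then show ?case using a by simp
  qed
qed

lemma mom:
  assumes fm: "f \<in> borel_measurable (F l)" and fi: "integrable M f" and f0: "\<And>x. 0 \<le> f x"
  shows "integrable M (\<lambda>x. f x * (w l x)\<^sup>2)"
proof -
  interpret S: sigma_finite_subalgebra M "F l" by (rule sfs)
  have fM[measurable]: "f \<in> borel_measurable M" using FM[OF fm] .
  have efm: "(\<lambda>x. ennreal (f x)) \<in> borel_measurable (F l)" using fm by measurable
  have "(\<integral>\<^sup>+ x. ennreal (f x * (w l x)\<^sup>2) \<partial>M) = (\<integral>\<^sup>+ x. ennreal (f x) * ennreal ((w l x)\<^sup>2) \<partial>M)"
    using f0 by (simp add: ennreal_mult)
  also have "\<dots> = (\<integral>\<^sup>+ x. ennreal (f x) * nn_cond_exp M (F l) (\<lambda>\<eta>. ennreal ((w l \<eta>)\<^sup>2)) x \<partial>M)"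
    by (rule S.nn_cond_exp_intg[symmetric]) (use efm in auto)
  also have "\<dots> = (\<integral>\<^sup>+ x. ennreal (f x) \<partial>M)"
    by (rule nn_integral_cong_AE) (use nn_w2[of l] in auto)
  also have "\<dots> = ennreal (\<integral> x. f x \<partial>M)"
    using fi f0 by (simp add: nn_integral_eq_integral)
  finally show ?thesis
    by (intro integrableI_nonneg) (auto simp: f0)
qed


definition L2 :: "('w \<Rightarrow> real^'a) \<Rightarrow> bool" where
  "L2 f \<longleftrightarrow> f \<in> borel_measurable M \<and> integrable M (\<lambda>\<omega>. (norm (f \<omega>))\<^sup>2)"

lemma L2_meas[measurable_dest]: "L2 f \<Longrightarrow> f \<in> borel_measurable M"
  by (simp add: L2_def)

lemma L2_int: "L2 f \<Longrightarrow> integrable M (\<lambda>\<omega>. (norm (f \<omega>))\<^sup>2)"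
  by (simp add: L2_def)

lemma sq_sum_le: "(norm (a + b::real^'a))\<^sup>2 \<le> 2 * (norm a)\<^sup>2 + 2 * (norm b)\<^sup>2"
proof -
  have "norm (a + b) \<le> norm a + norm b" by (rule norm_triangle_ineq)
  then have "(norm (a + b))\<^sup>2 \<le> (norm a + norm b)\<^sup>2" by (simp add: power_mono)
  also have "\<dots> \<le> 2 * (norm a)\<^sup>2 + 2 * (norm b)\<^sup>2"
    using zero_le_power2[of "norm a - norm b"] unfolding power2_sum power2_diff by linarith
  finally show ?thesis .
qed

lemma L2_add: "L2 f \<Longrightarrow> L2 g \<Longrightarrow> L2 (\<lambda>\<omega>. f \<omega> + g \<omega>)"
  unfolding L2_def
proof (intro conjI)
  assume a: "f \<in> borel_measurable M \<and> integrable M (\<lambda>\<omega>. (norm (f \<omega>))\<^sup>2)"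
     "g \<in> borel_measurable M \<and> integrable M (\<lambda>\<omega>. (norm (g \<omega>))\<^sup>2)"
  then show m: "(\<lambda>\<omega>. f \<omega> + g \<omega>) \<in> borel_measurable M" using borel_measurable_add by blast
  show "integrable M (\<lambda>\<omega>. (norm (f \<omega> + g \<omega>))\<^sup>2)"
  proof (rule Bochner_Integration.integrable_bound[where f="\<lambda>\<omega>. 2 * (norm (f \<omega>))\<^sup>2 + 2 * (norm (g \<omega>))\<^sup>2"])
    show "integrable M (\<lambda>\<omega>. 2 * (norm (f \<omega>))\<^sup>2 + 2 * (norm (g \<omega>))\<^sup>2)" using a by simp
    show "(\<lambda>\<omega>. (norm (f \<omega> + g \<omega>))\<^sup>2) \<in> borel_measurable M" using m by measurable
    show "AE x in M. norm ((norm (f x + g x))\<^sup>2) \<le> norm (2 * (norm (f x))\<^sup>2 + 2 * (norm (g x))\<^sup>2)"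
      by (intro AE_I2) (use sq_sum_le[of "f _" "g _"] in auto)
  qed
qed

lemma L2_mat: "L2 f \<Longrightarrow> L2 (\<lambda>\<omega>. (P::real^'a^'b) *v f \<omega>)"
  unfolding L2_def
proof (intro conjI)
  assume a: "f \<in> borel_measurable M \<and> integrable M (\<lambda>\<omega>. (norm (f \<omega>))\<^sup>2)"
  then show m: "(\<lambda>\<omega>. P *v f \<omega>) \<in> borel_measurable M" using mat_meas[of f M P] by simp
  obtain K where K: "\<And>x. norm (P *v x) \<le> norm x * K"
    using bounded_linear.bounded[OF matrix_vector_mul_bounded_linear[of P]] by (auto simp: mult.commute)
  have b: "(norm (P *v x))\<^sup>2 \<le> K\<^sup>2 * (norm x)\<^sup>2" for x
  proof -
    have "(norm (P *v x))\<^sup>2 \<le> (norm x * K)\<^sup>2" by (rule power_mono[OF K[of x]]) simp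
    then show ?thesis by (simp add: power_mult_distrib mult.commute)
  qed
  show "integrable M (\<lambda>\<omega>. (norm (P *v f \<omega>))\<^sup>2)"
  proof (rule Bochner_Integration.integrable_bound[where f="\<lambda>\<omega>. K\<^sup>2 * (norm (f \<omega>))\<^sup>2"])
    show "integrable M (\<lambda>\<omega>. K\<^sup>2 * (norm (f \<omega>))\<^sup>2)" using a by simp
    show "(\<lambda>\<omega>. (norm (P *v f \<omega>))\<^sup>2) \<in> borel_measurable M" using m by measurable
    show "AE x in M. norm ((norm (P *v f x))\<^sup>2) \<le> norm (K\<^sup>2 * (norm (f x))\<^sup>2)"
      using b by (intro AE_I2) (simp add: abs_le_iff order_trans[OF b])
  qed
qed

lemma L2_const: "L2 (\<lambda>\<omega>. c)"
  unfolding L2_def by simp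

lemma L2_scale: "L2 f \<Longrightarrow> L2 (\<lambda>\<omega>. c *\<^sub>R f \<omega>)"
  unfolding L2_def by (auto simp: power_mult_distrib)

lemma L2_neg: "L2 f \<Longrightarrow> L2 (\<lambda>\<omega>. - f \<omega>)"
  using L2_scale[of f "-1"] by simp

lemma L2_diff: "L2 f \<Longrightarrow> L2 g \<Longrightarrow> L2 (\<lambda>\<omega>. f \<omega> - g \<omega>)"
  using L2_add[of f "\<lambda>\<omega>. - g \<omega>"] L2_neg[of g] by simp

lemma L2_w: assumes fm: "f \<in> borel_measurable (F l)" and f: "L2 f"
  shows "L2 (\<lambda>\<omega>. w l \<omega> *\<^sub>R f \<omega>)"
proof -
  have fm'[measurable]: "f \<in> borel_measurable M" using f L2_meas by blast
  have nm: "(\<lambda>\<omega>. (norm (f \<omega>))\<^sup>2) \<in> borel_measurable (F l)" using fm by measurable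
  have "integrable M (\<lambda>\<omega>. (norm (f \<omega>))\<^sup>2 * (w l \<omega>)\<^sup>2)"
    by (rule mom[OF nm L2_int[OF f]]) simp
  then show ?thesis unfolding L2_def by (simp add: power_mult_distrib mult.commute)
qed

lemma L2_AE: "L2 f \<Longrightarrow> g \<in> borel_measurable M \<Longrightarrow> AE \<omega> in M. f \<omega> = g \<omega> \<Longrightarrow> L2 g"
  unfolding L2_def
  by (auto intro: integrable_cong_AE_imp)

lemma L2_prod_comp:
  assumes f: "L2 f" and g: "L2 g"
  shows "integrable M (\<lambda>\<omega>. (f \<omega> :: real^'a) $ i * (g \<omega> :: real^'b) $ j)"
proof (rule Bochner_Integration.integrable_bound[where f="\<lambda>\<omega>. (norm (f \<omega>))\<^sup>2 + (norm (g \<omega>))\<^sup>2"])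
  show "integrable M (\<lambda>\<omega>. (norm (f \<omega>))\<^sup>2 + (norm (g \<omega>))\<^sup>2)" using f g by (simp add: L2_int)
  show "(\<lambda>\<omega>. f \<omega> $ i * g \<omega> $ j) \<in> borel_measurable M"
    using f g by (auto intro!: borel_measurable_times vec_comp_meas dest: L2_meas)
  show "AE x in M. norm (f x $ i * g x $ j) \<le> norm ((norm (f x))\<^sup>2 + (norm (g x))\<^sup>2)"
  proof (intro AE_I2)
    fix x
    have a: "\<bar>f x $ i\<bar> \<le> norm (f x)" "\<bar>g x $ j\<bar> \<le> norm (g x)" by (rule component_le_norm_cart)+
    have "\<bar>f x $ i * g x $ j\<bar> \<le> norm (f x) * norm (g x)"
      unfolding abs_mult by (rule mult_mono) (use a in auto)
    also have "\<dots> \<le> (norm (f x))\<^sup>2 + (norm (g x))\<^sup>2"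
      using zero_le_power2[of "norm (f x) - norm (g x)"] mult_nonneg_nonneg[OF norm_ge_zero norm_ge_zero, of "f x" "g x"]
      unfolding power2_diff by linarith
    finally show "norm (f x $ i * g x $ j) \<le> norm ((norm (f x))\<^sup>2 + (norm (g x))\<^sup>2)" by simp
  qed
qed

lemma L2_inner:
  assumes f: "L2 f" and g: "L2 g"
  shows "integrable M (\<lambda>\<omega>. (f \<omega> :: real^'a) \<bullet> g \<omega>)"
  unfolding inner_vec_def inner_real_def
  by (intro Bochner_Integration.integrable_sum L2_prod_comp f g)

lemma L2_comp2: "L2 f \<Longrightarrow> integrable M (\<lambda>\<omega>. ((f \<omega> :: real^'a) $ i)\<^sup>2)"
  using L2_prod_comp[of f f i i] by (simp add: power2_eq_square)

lemma L2_comp: "L2 f \<Longrightarrow> integrable M (\<lambda>\<omega>. (f \<omega> :: real^'a) $ i)"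
  using L2_prod_comp[OF _ L2_const[of "1::real^'a"], of f i i] by simp

lemma L2_comps: assumes "f \<in> borel_measurable M" "\<And>i. integrable M (\<lambda>\<omega>. ((f \<omega> :: real^'a) $ i)\<^sup>2)"
  shows "L2 f"
proof -
  have e: "\<And>\<omega>. (norm (f \<omega>))\<^sup>2 = (\<Sum>i\<in>UNIV. (f \<omega> $ i)\<^sup>2)"
    by (simp only: power2_norm_eq_inner) (simp add: inner_vec_def power2_eq_square)
  show ?thesis unfolding L2_def e using assms by auto
qed

lemma vce_comp[simp]: "vcond_exp M G Z \<omega> $ i = real_cond_exp M G (\<lambda>\<eta>. Z \<eta> $ i) \<omega>"
  by (simp add: vcond_exp_def)

lemma vce_meas[measurable]: "vcond_exp M (F l) Z \<in> borel_measurable (F l)"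
  by (rule vec_meas_comps) simp

lemma vce_measM[measurable]: "vcond_exp M (F l) Z \<in> borel_measurable M"
  by (rule FM[OF vce_meas])

lemma vce_L2: assumes "L2 Z" shows "L2 (vcond_exp M (F l) Z)"
proof (rule L2_comps)
  interpret S: sigma_finite_subalgebra M "F l" by (rule sfs)
  show "vcond_exp M (F l) Z \<in> borel_measurable M" by simp
  fix i
  have "integrable M (\<lambda>x. (real_cond_exp M (F l) (\<lambda>\<eta>. Z \<eta> $ i) x)\<^sup>2)"
    by (rule S.integrable_convex_cond_exp[where I=UNIV])
       (use assms L2_comp L2_comp2 convex_power2 in auto)
  then show "integrable M (\<lambda>\<omega>. (vcond_exp M (F l) Z \<omega> $ i)\<^sup>2)" by simp
qed

lemma vce_pull:
  assumes gm: "g \<in> borel_measurable (F l)" and Zm: "Z \<in> borel_measurable M"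
    and gi: "\<And>i. integrable M (\<lambda>\<omega>. (g \<omega> :: real^'a) $ i * Z \<omega> $ i)"
  shows "integrable M (\<lambda>\<omega>. vcond_exp M (F l) Z \<omega> \<bullet> g \<omega>)"
    "(\<integral>\<omega>. Z \<omega> \<bullet> g \<omega> \<partial>M) = (\<integral>\<omega>. vcond_exp M (F l) Z \<omega> \<bullet> g \<omega> \<partial>M)"
proof -
  interpret S: sigma_finite_subalgebra M "F l" by (rule sfs)
  have gcm: "\<And>i. (\<lambda>\<omega>. g \<omega> $ i) \<in> borel_measurable (F l)" using gm vec_comp_meas by blast
  have Zcm: "\<And>i. (\<lambda>\<omega>. Z \<omega> $ i) \<in> borel_measurable M" using Zm vec_comp_meas by blast
  have r: "\<And>i. integrable M (\<lambda>\<omega>. g \<omega> $ i * real_cond_exp M (F l) (\<lambda>\<eta>. Z \<eta> $ i) \<omega>)"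
     "\<And>i. (\<integral>\<omega>. g \<omega> $ i * real_cond_exp M (F l) (\<lambda>\<eta>. Z \<eta> $ i) \<omega> \<partial>M) = (\<integral>\<omega>. g \<omega> $ i * Z \<omega> $ i \<partial>M)"
    using S.real_cond_exp_intg[OF gi gcm Zcm] by auto
  have e1: "\<And>\<omega>. vcond_exp M (F l) Z \<omega> \<bullet> g \<omega> = (\<Sum>i\<in>UNIV. g \<omega> $ i * real_cond_exp M (F l) (\<lambda>\<eta>. Z \<eta> $ i) \<omega>)"
    by (simp add: inner_vec_def mult.commute)
  have e2: "\<And>\<omega>. Z \<omega> \<bullet> g \<omega> = (\<Sum>i\<in>UNIV. g \<omega> $ i * Z \<omega> $ i)"
    by (simp add: inner_vec_def mult.commute)
  show "integrable M (\<lambda>\<omega>. vcond_exp M (F l) Z \<omega> \<bullet> g \<omega>)"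
    unfolding e1 by (intro Bochner_Integration.integrable_sum r)
  show "(\<integral>\<omega>. Z \<omega> \<bullet> g \<omega> \<partial>M) = (\<integral>\<omega>. vcond_exp M (F l) Z \<omega> \<bullet> g \<omega> \<partial>M)"
    unfolding e1 e2 using r gi by (simp add: integral_sum)
qed


lemma step_meas:
  assumes a: "a \<in> borel_measurable (F j)" and b: "b \<in> borel_measurable (F j)"
  shows "(\<lambda>\<omega>. (a \<omega> :: real^'a) + w j \<omega> *\<^sub>R b \<omega>) \<in> borel_measurable (F (Suc j))"
proof -
  have [measurable]: "a \<in> borel_measurable (F (Suc j))" "b \<in> borel_measurable (F (Suc j))"
    "w j \<in> borel_measurable (F (Suc j))"
    using F_mono[OF _ a] F_mono[OF _ b] w_F by auto
  show ?thesis by measurable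
qed

lemma step_L2:
  assumes a: "a \<in> borel_measurable (F j)" and b: "b \<in> borel_measurable (F j)" and "L2 a" "L2 b"
  shows "L2 (\<lambda>\<omega>. (a \<omega> :: real^'a) + w j \<omega> *\<^sub>R b \<omega>)"
  by (intro L2_add L2_w assms)

lemma F_add: "a \<in> borel_measurable (F j) \<Longrightarrow> b \<in> borel_measurable (F j) \<Longrightarrow> (\<lambda>\<omega>. (a \<omega> :: real^'a) + b \<omega>) \<in> borel_measurable (F j)"
  by measurable

end

locale lqp = lqs M x0 w for M :: "'w measure" and x0 :: "'w \<Rightarrow> real^'n" and w +
  fixes N :: nat and A C Q :: "nat \<Rightarrow> nat \<Rightarrow> real^'n^'n" and B D :: "nat \<Rightarrow> nat \<Rightarrow> real^'m^'n"
    and R :: "nat \<Rightarrow> nat \<Rightarrow> real^'m^'m" and G :: "nat \<Rightarrow> real^'n^'n" and \<Phi> :: "nat \<Rightarrow> real^'n^'m"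
  assumes Qs: "\<And>t k. t < N \<Longrightarrow> t \<le> k \<Longrightarrow> k < N \<Longrightarrow> transpose (Q t k) = Q t k"
    and Rs: "\<And>t k. t < N \<Longrightarrow> t \<le> k \<Longrightarrow> k < N \<Longrightarrow> transpose (R t k) = R t k"
    and Gs: "\<And>t. t < N \<Longrightarrow> transpose (G t) = G t"
begin

definition "Ab k l = A k l + B k l ** \<Phi> l"
definition "Cb k l = C k l + D k l ** \<Phi> l"
definition "Pm k l = Q k l + transpose (\<Phi> l) ** R k l ** \<Phi> l"

abbreviation "cl \<equiv> cl_state A B C D w \<Phi>"
abbreviation "X0 k y \<equiv> cl k y (\<lambda>\<omega>. \<Phi> k *v y \<omega>)"
abbreviation "Y k u \<equiv> cl k (\<lambda>\<omega>. 0) u"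

lemma cl_le: "j \<le> k \<Longrightarrow> cl k y v j = y"
  by (induction j) auto

lemma cl_Suc_k: "cl k y v (Suc k) = (\<lambda>\<omega>. A k k *v y \<omega> + B k k *v v \<omega> + w k \<omega> *\<^sub>R (C k k *v y \<omega> + D k k *v v \<omega>))"
  by (simp add: cl_le)

lemma cl_Suc_gt: "k < j \<Longrightarrow> cl k y v (Suc j) = (\<lambda>\<omega>. Ab k j *v cl k y v j \<omega> + w j \<omega> *\<^sub>R (Cb k j *v cl k y v j \<omega>))"
  by (simp add: Ab_def Cb_def)

lemma mv_add_mul: "(P + S ** T) *v x = P *v x + S *v (T *v x)"
  by (simp add: matrix_vector_mult_add_rdistrib matrix_vector_mul_assoc)

lemma X0_step: "k \<le> l \<Longrightarrow> X0 k y (Suc l) \<omega> = Ab k l *v X0 k y l \<omega> + w l \<omega> *\<^sub>R (Cb k l *v X0 k y l \<omega>)"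
proof (cases "k = l")
  case True
  then show ?thesis by (simp add: cl_Suc_k cl_le Ab_def Cb_def mv_add_mul)
next
  case False
  assume "k \<le> l" with False have "k < l" by simp
  then show ?thesis by (simp add: Ab_def Cb_def)
qed

lemma cl_F:
  assumes y: "y \<in> borel_measurable (F k)" "L2 y" and v: "v \<in> borel_measurable (F k)" "L2 v"
  shows "k \<le> j \<Longrightarrow> cl k y v j \<in> borel_measurable (F j) \<and> L2 (cl k y v j)"
proof (induction j)
  case 0
  then show ?case using y by (simp)
next
  case (Suc j)
  show ?case
  proof (cases "j < k")
    case True
    with Suc.prems have "k = Suc j" by simp
    then show ?thesis using y cl_le[of "Suc j" k y v] by simp
  next
    case False
    show ?thesis
    proof (cases "j = k")
      case True
      have e: "cl k y v (Suc j) = (\<lambda>\<omega>. (A k k *v y \<omega> + B k k *v v \<omega>) + w k \<omega> *\<^sub>R (C k k *v y \<omega> + D k k *v v \<omega>))"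
        using True cl_Suc_k by simp
      have m: "(\<lambda>\<omega>. A k k *v y \<omega> + B k k *v v \<omega>) \<in> borel_measurable (F k)"
        "(\<lambda>\<omega>. C k k *v y \<omega> + D k k *v v \<omega>) \<in> borel_measurable (F k)"
        using y v by (auto intro!: F_add mat_meas)
      have l: "L2 (\<lambda>\<omega>. A k k *v y \<omega> + B k k *v v \<omega>)" "L2 (\<lambda>\<omega>. C k k *v y \<omega> + D k k *v v \<omega>)"
        using y v by (auto intro!: L2_add L2_mat)
      show ?thesis unfolding e True using step_meas[OF m] step_L2[OF m l] by simp
    next
      case False2: False
      with False have kj: "k < j" by simp
      then have IH: "cl k y v j \<in> borel_measurable (F j)" "L2 (cl k y v j)" using Suc.IH by auto
      have m: "(\<lambda>\<omega>. Ab k j *v cl k y v j \<omega>) \<in> borel_measurable (F j)"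
        "(\<lambda>\<omega>. Cb k j *v cl k y v j \<omega>) \<in> borel_measurable (F j)"
        using IH by (auto intro!: mat_meas)
      have l: "L2 (\<lambda>\<omega>. Ab k j *v cl k y v j \<omega>)" "L2 (\<lambda>\<omega>. Cb k j *v cl k y v j \<omega>)"
        using IH by (auto intro!: L2_mat)
      show ?thesis unfolding cl_Suc_gt[OF kj] using step_meas[OF m] step_L2[OF m l] by simp
    qed
  qed
qed

lemma eq_F: "eq_state A B C D w \<Phi> t x j \<in> borel_measurable (F j) \<and> L2 (eq_state A B C D w \<Phi> t x j)"
proof (induction j)
  case 0
  then show ?case by (simp add: L2_const)
next
  case (Suc j)
  show ?case
  proof (cases "j < t")
    case True
    then show ?thesis by (simp add: L2_const)
  next
    case False
    let ?E = "eq_state A B C D w \<Phi> t x j"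
    have e: "eq_state A B C D w \<Phi> t x (Suc j) = (\<lambda>\<omega>. (A j j + B j j ** \<Phi> j) *v ?E \<omega> + w j \<omega> *\<^sub>R ((C j j + D j j ** \<Phi> j) *v ?E \<omega>))"
      using False by simp
    have m: "(\<lambda>\<omega>. (A j j + B j j ** \<Phi> j) *v ?E \<omega>) \<in> borel_measurable (F j)"
      "(\<lambda>\<omega>. (C j j + D j j ** \<Phi> j) *v ?E \<omega>) \<in> borel_measurable (F j)"
      using Suc.IH by (auto intro!: mat_meas)
    have l: "L2 (\<lambda>\<omega>. (A j j + B j j ** \<Phi> j) *v ?E \<omega>)" "L2 (\<lambda>\<omega>. (C j j + D j j ** \<Phi> j) *v ?E \<omega>)"
      using Suc.IH by (auto intro!: L2_mat)
    show ?thesis unfolding e using step_meas[OF m] step_L2[OF m l] by simp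
  qed
qed

lemma cl_lin: "cl k (\<lambda>\<omega>. y1 \<omega> + y2 \<omega>) (\<lambda>\<omega>. v1 \<omega> + v2 \<omega>) j \<omega> = cl k y1 v1 j \<omega> + cl k y2 v2 j \<omega>"
  by (induction j) (auto simp: algebra_simps)

lemma cl_scale: "Y k (\<lambda>\<omega>. c *\<^sub>R u \<omega>) j \<omega> = c *\<^sub>R Y k u j \<omega>"
  by (induction j) (auto simp: algebra_simps)

lemma ol_cl_gen:
  assumes U1: "U k = v" and U2: "\<And>l. l \<noteq> k \<Longrightarrow> U l = (\<lambda>\<omega>. \<Phi> l *v cl k y v l \<omega>)"
  shows "ol_state A B C D w k y U j = cl k y v j"
proof (induction j)
  case 0
  then show ?case by simp
next
  case (Suc j)
  show ?case by (rule ext) (auto simp: Suc.IH U1 U2 mv_add_mul cl_le algebra_simps matrix_vector_mul_assoc)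
qed

lemma ol_cl: "ol_state A B C D w k y (fb_control \<Phi> k v (cl k y v)) j = cl k y v j"
  by (rule ol_cl_gen) (auto simp: fb_control_def)


lemma dot_mat: "(x::real^'b) \<bullet> ((P::real^'a^'b) *v y) = (transpose P *v x) \<bullet> y"
  by (simp add: dot_lmul_matrix)

lemma qf_add: assumes "transpose P = P"
  shows "qf P (a + b) = qf P a + 2 * ((P *v a) \<bullet> b) + qf P b"
proof -
  have 1: "a \<bullet> (P *v b) = (P *v a) \<bullet> b" using dot_mat[of a P b] assms by simp
  have 2: "b \<bullet> (P *v a) = (P *v a) \<bullet> b" by (simp add: inner_commute)
  show ?thesis unfolding qf_def
    by (simp add: matrix_vector_right_distrib inner_add_left inner_add_right 1 2)
qed

lemma qf_phi: "qf Rm (\<Phi>' *v a) = qf (transpose \<Phi>' ** Rm ** \<Phi>') a"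
proof -
  have "(\<Phi>' *v a) \<bullet> (Rm *v (\<Phi>' *v a)) = (Rm *v (\<Phi>' *v a)) \<bullet> (\<Phi>' *v a)" by (simp add: inner_commute)
  also have "\<dots> = (transpose \<Phi>' *v (Rm *v (\<Phi>' *v a))) \<bullet> a" by (rule dot_mat)
  also have "\<dots> = a \<bullet> ((transpose \<Phi>' ** Rm ** \<Phi>') *v a)"
    by (simp add: inner_commute matrix_vector_mul_assoc matrix_mul_assoc)
  finally show ?thesis unfolding qf_def .
qed

lemma cross_phi: "(Rm *v (\<Phi>' *v (a::real^'a))) \<bullet> (\<Phi>' *v b) = ((transpose \<Phi>' ** Rm ** \<Phi>') *v a) \<bullet> b"
proof -
  have "(Rm *v (\<Phi>' *v a)) \<bullet> (\<Phi>' *v b) = (transpose \<Phi>' *v (Rm *v (\<Phi>' *v a))) \<bullet> b" by (rule dot_mat[of "Rm *v (\<Phi>' *v a)" \<Phi>' b])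
  then show ?thesis by (simp add: matrix_vector_mul_assoc matrix_mul_assoc)
qed

lemma qf_madd: "qf (P1 + P2) a = qf P1 a + qf P2 a"
  unfolding qf_def by (simp add: matrix_vector_mult_add_rdistrib inner_add_right)

lemma qf_zero[simp]: "qf P 0 = 0"
  unfolding qf_def by simp

lemma pt_gt:
  assumes "transpose Q' = Q'" "transpose R' = R'"
  shows "qf Q' (a + b) + qf R' (\<Phi>' *v (a + b)) =
    (qf Q' a + qf R' (\<Phi>' *v a)) + 2 * (((Q' + transpose \<Phi>' ** R' ** \<Phi>') *v a) \<bullet> b)
     + qf (Q' + transpose \<Phi>' ** R' ** \<Phi>') b"
proof -
  have "qf R' (\<Phi>' *v (a + b)) = qf R' (\<Phi>' *v a + \<Phi>' *v b)" by (simp add: matrix_vector_right_distrib)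
  also have "\<dots> = qf R' (\<Phi>' *v a) + 2 * ((R' *v (\<Phi>' *v a)) \<bullet> (\<Phi>' *v b)) + qf R' (\<Phi>' *v b)"
    by (rule qf_add[OF assms(2)])
  finally have r: "qf R' (\<Phi>' *v (a + b)) = qf R' (\<Phi>' *v a) + 2 * (((transpose \<Phi>' ** R' ** \<Phi>') *v a) \<bullet> b)
      + qf (transpose \<Phi>' ** R' ** \<Phi>') b" by (simp add: cross_phi qf_phi)
  show ?thesis unfolding r qf_add[OF assms(1)] qf_madd
    by (simp add: matrix_vector_mult_add_rdistrib inner_add_left algebra_simps)
qed

lemma qf_int: "L2 a \<Longrightarrow> integrable M (\<lambda>\<omega>. qf P (a \<omega>))"
  unfolding qf_def by (intro L2_inner L2_mat)

lemma cr_int: "L2 a \<Longrightarrow> L2 b \<Longrightarrow> integrable M (\<lambda>\<omega>. (P *v a \<omega>) \<bullet> b \<omega>)"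
  by (intro L2_inner L2_mat)

definition "Jv k y v = lq_cost M N A B C D Q R G w k y (fb_control \<Phi> k v (cl k y v))"

definition "Quad k u = (\<integral>\<omega>. qf (R k k) (u \<omega>) \<partial>M)
   + (\<Sum>l=k..<N. \<integral>\<omega>. qf (Pm k l) (Y k u l \<omega>) \<partial>M)
   + (\<integral>\<omega>. qf (G k) (Y k u N \<omega>) \<partial>M)"

definition "Cross k y u = (\<integral>\<omega>. (R k k *v (\<Phi> k *v y \<omega>)) \<bullet> u \<omega> \<partial>M)
   + (\<Sum>l=Suc k..<N. \<integral>\<omega>. (Pm k l *v X0 k y l \<omega>) \<bullet> Y k u l \<omega> \<partial>M)
   + (\<integral>\<omega>. (G k *v X0 k y N \<omega>) \<bullet> Y k u N \<omega> \<partial>M)"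

lemma Jv_eq: "Jv k y v = (\<Sum>l=k..<N. \<integral>\<omega>. qf (Q k l) (cl k y v l \<omega>) + qf (R k l) (fb_control \<Phi> k v (cl k y v) l \<omega>) \<partial>M)
   + (\<integral>\<omega>. qf (G k) (cl k y v N \<omega>) \<partial>M)"
  unfolding Jv_def lq_cost_def ol_cl ..

lemma decompA:
  assumes kN: "k < N" and y: "y \<in> borel_measurable (F k)" "L2 y" and u: "u \<in> borel_measurable (F k)" "L2 u"
  shows "Jv k y (\<lambda>\<omega>. \<Phi> k *v y \<omega> + u \<omega>) = Jv k y (\<lambda>\<omega>. \<Phi> k *v y \<omega>) + 2 * Cross k y u + Quad k u"
proof -
  let ?v0 = "\<lambda>\<omega>. \<Phi> k *v y \<omega>"
  let ?v1 = "\<lambda>\<omega>. \<Phi> k *v y \<omega> + u \<omega>"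
  have v0: "?v0 \<in> borel_measurable (F k)" "L2 ?v0" using y by (auto intro: mat_meas L2_mat)
  have z: "(\<lambda>\<omega>. 0::real^'n) \<in> borel_measurable (F k)" "L2 (\<lambda>\<omega>. 0::real^'n)" by (auto simp: L2_const)
  have XL: "\<And>l. k \<le> l \<Longrightarrow> L2 (X0 k y l)" using cl_F[OF y v0] by auto
  have YL: "\<And>l. k \<le> l \<Longrightarrow> L2 (Y k u l)" using cl_F[OF z u] by auto
  have lin: "\<And>l \<omega>. cl k y ?v1 l \<omega> = X0 k y l \<omega> + Y k u l \<omega>"
    using cl_lin[of k y "\<lambda>\<omega>. 0" ?v0 u] by simp
  have Yk: "\<And>\<omega>. Y k u k \<omega> = 0" by (simp add: cl_le)
  have Xk: "\<And>\<omega>. X0 k y k \<omega> = y \<omega>" by (simp add: cl_le)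
  define I0 where "I0 l = (\<integral>\<omega>. qf (Q k l) (cl k y ?v0 l \<omega>) + qf (R k l) (fb_control \<Phi> k ?v0 (cl k y ?v0) l \<omega>) \<partial>M)" for l
  define I1 where "I1 l = (\<integral>\<omega>. qf (Q k l) (cl k y ?v1 l \<omega>) + qf (R k l) (fb_control \<Phi> k ?v1 (cl k y ?v1) l \<omega>) \<partial>M)" for l
  define Cc where "Cc l = (if l = k then (\<integral>\<omega>. (R k k *v (\<Phi> k *v y \<omega>)) \<bullet> u \<omega> \<partial>M)
      else (\<integral>\<omega>. (Pm k l *v X0 k y l \<omega>) \<bullet> Y k u l \<omega> \<partial>M))" for l
  define Qd where "Qd l = (if l = k then (\<integral>\<omega>. qf (R k k) (u \<omega>) \<partial>M)
      else (\<integral>\<omega>. qf (Pm k l) (Y k u l \<omega>) \<partial>M))" for l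
  have step: "I1 l = I0 l + 2 * Cc l + Qd l" if l: "l \<in> {k..<N}" for l
  proof (cases "l = k")
    case True
    have Rk: "transpose (R k k) = R k k" using Rs[of k k] kN by simp
    have pt: "qf (Q k l) (cl k y ?v1 l \<omega>) + qf (R k l) (fb_control \<Phi> k ?v1 (cl k y ?v1) l \<omega>)
        = (qf (Q k l) (cl k y ?v0 l \<omega>) + qf (R k l) (fb_control \<Phi> k ?v0 (cl k y ?v0) l \<omega>))
          + 2 * ((R k k *v (\<Phi> k *v y \<omega>)) \<bullet> u \<omega>) + qf (R k k) (u \<omega>)" for \<omega>
      using True by (simp add: fb_control_def cl_le qf_add[OF Rk])
    have i0: "integrable M (\<lambda>\<omega>. qf (Q k l) (cl k y ?v0 l \<omega>) + qf (R k l) (fb_control \<Phi> k ?v0 (cl k y ?v0) l \<omega>))"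
      using True y v0 by (simp add: fb_control_def cl_le qf_int)
    have i1: "integrable M (\<lambda>\<omega>. 2 * ((R k k *v (\<Phi> k *v y \<omega>)) \<bullet> u \<omega>))"
      using cr_int[OF v0(2) u(2)] by simp
    have i2: "integrable M (\<lambda>\<omega>. qf (R k k) (u \<omega>))" using qf_int[OF u(2)] .
    show ?thesis unfolding I1_def pt I0_def Cc_def Qd_def using True i0 i1 i2 by simp
  next
    case False
    with l have kl: "k < l" "l < N" by auto
    have Ql: "transpose (Q k l) = Q k l" using Qs[of k l] kl by simp
    have Rl: "transpose (R k l) = R k l" using Rs[of k l] kl by simp
    have pt: "qf (Q k l) (cl k y ?v1 l \<omega>) + qf (R k l) (fb_control \<Phi> k ?v1 (cl k y ?v1) l \<omega>)
        = (qf (Q k l) (cl k y ?v0 l \<omega>) + qf (R k l) (fb_control \<Phi> k ?v0 (cl k y ?v0) l \<omega>))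
          + 2 * ((Pm k l *v X0 k y l \<omega>) \<bullet> Y k u l \<omega>) + qf (Pm k l) (Y k u l \<omega>)" for \<omega>
      using False pt_gt[OF Ql Rl, of "X0 k y l \<omega>" "Y k u l \<omega>" "\<Phi> l"]
      by (simp add: fb_control_def lin Pm_def)
    have Xl: "L2 (X0 k y l)" "L2 (Y k u l)" using XL YL kl by auto
    have i0: "integrable M (\<lambda>\<omega>. qf (Q k l) (cl k y ?v0 l \<omega>) + qf (R k l) (fb_control \<Phi> k ?v0 (cl k y ?v0) l \<omega>))"
      using False Xl by (simp add: fb_control_def qf_int L2_mat)
    have i1: "integrable M (\<lambda>\<omega>. 2 * ((Pm k l *v X0 k y l \<omega>) \<bullet> Y k u l \<omega>))"
      using cr_int[OF Xl] by simp
    have i2: "integrable M (\<lambda>\<omega>. qf (Pm k l) (Y k u l \<omega>))" using qf_int[OF Xl(2)] .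
    show ?thesis unfolding I1_def pt I0_def Cc_def Qd_def using False i0 i1 i2 by simp
  qed
  have sumI: "(\<Sum>l=k..<N. I1 l) = (\<Sum>l=k..<N. I0 l) + 2 * (\<Sum>l=k..<N. Cc l) + (\<Sum>l=k..<N. Qd l)"
    using step by (simp add: sum.distrib sum_distrib_left)
  have sumC: "(\<Sum>l=k..<N. Cc l) = (\<integral>\<omega>. (R k k *v (\<Phi> k *v y \<omega>)) \<bullet> u \<omega> \<partial>M)
      + (\<Sum>l=Suc k..<N. \<integral>\<omega>. (Pm k l *v X0 k y l \<omega>) \<bullet> Y k u l \<omega> \<partial>M)"
    using kN by (simp add: sum.atLeast_Suc_lessThan Cc_def)
  have sumQ: "(\<Sum>l=k..<N. Qd l) = (\<integral>\<omega>. qf (R k k) (u \<omega>) \<partial>M)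
      + (\<Sum>l=k..<N. \<integral>\<omega>. qf (Pm k l) (Y k u l \<omega>) \<partial>M)"
    using kN by (simp add: sum.atLeast_Suc_lessThan Qd_def Yk)
  have Gk: "transpose (G k) = G k" using Gs kN by simp
  have XN: "L2 (X0 k y N)" "L2 (Y k u N)" using XL YL kN by auto
  have ptN: "qf (G k) (cl k y ?v1 N \<omega>) = qf (G k) (X0 k y N \<omega>) + 2 * ((G k *v X0 k y N \<omega>) \<bullet> Y k u N \<omega>) + qf (G k) (Y k u N \<omega>)" for \<omega>
    unfolding lin by (rule qf_add[OF Gk])
  have IN: "(\<integral>\<omega>. qf (G k) (cl k y ?v1 N \<omega>) \<partial>M) = (\<integral>\<omega>. qf (G k) (X0 k y N \<omega>) \<partial>M)
      + 2 * (\<integral>\<omega>. (G k *v X0 k y N \<omega>) \<bullet> Y k u N \<omega> \<partial>M) + (\<integral>\<omega>. qf (G k) (Y k u N \<omega>) \<partial>M)"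
    unfolding ptN using qf_int[OF XN(1)] qf_int[OF XN(2)] cr_int[OF XN] by simp
  show ?thesis
    unfolding Jv_eq I1_def[symmetric] I0_def[symmetric] sumI sumC sumQ IN Cross_def Quad_def
    by (simp add: algebra_simps)
qed


lemma mv_borel[measurable]: "(\<lambda>x. (P::real^'a^'b) *v x) \<in> borel_measurable borel"
  by (rule borel_measurable_continuous_onI)
     (auto intro: linear_continuous_on matrix_vector_mul_linear simp: linear_conv_bounded_linear[symmetric])

lemma Quad_scale: "Quad k (\<lambda>\<omega>. c *\<^sub>R u \<omega>) = c\<^sup>2 * Quad k u"
proof -
  have q: "\<And>P x. qf P (c *\<^sub>R x) = c\<^sup>2 * qf P x"
    unfolding qf_def by (simp add: matrix_vector_mult_scaleR power2_eq_square)
  show ?thesis unfolding Quad_def cl_scale q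
    by (simp add: sum_distrib_left algebra_simps)
qed

lemma pull_step:
  assumes g1: "g1 \<in> borel_measurable (F l)" "L2 g1" and g2: "g2 \<in> borel_measurable (F l)" "L2 g2"
    and Z: "L2 Zs"
  shows "integrable M (\<lambda>\<omega>. vcond_exp M (F l) Zs \<omega> \<bullet> g1 \<omega> + vcond_exp M (F l) (\<lambda>\<eta>. w l \<eta> *\<^sub>R Zs \<eta>) \<omega> \<bullet> g2 \<omega>)"
    "(\<integral>\<omega>. Zs \<omega> \<bullet> ((g1 \<omega> :: real^'a) + w l \<omega> *\<^sub>R g2 \<omega>) \<partial>M)
     = (\<integral>\<omega>. vcond_exp M (F l) Zs \<omega> \<bullet> g1 \<omega> + vcond_exp M (F l) (\<lambda>\<eta>. w l \<eta> *\<^sub>R Zs \<eta>) \<omega> \<bullet> g2 \<omega> \<partial>M)"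
proof -
  have Zm[measurable]: "Zs \<in> borel_measurable M" using Z by (rule L2_meas)
  have wZm: "(\<lambda>\<eta>. w l \<eta> *\<^sub>R Zs \<eta>) \<in> borel_measurable M" by measurable
  have wg2: "L2 (\<lambda>\<omega>. w l \<omega> *\<^sub>R g2 \<omega>)" using L2_w[OF g2] .
  have p1: "integrable M (\<lambda>\<omega>. vcond_exp M (F l) Zs \<omega> \<bullet> g1 \<omega>)"
       "(\<integral>\<omega>. Zs \<omega> \<bullet> g1 \<omega> \<partial>M) = (\<integral>\<omega>. vcond_exp M (F l) Zs \<omega> \<bullet> g1 \<omega> \<partial>M)"
    using vce_pull[OF g1(1) Zm L2_prod_comp[OF g1(2) Z]] by auto
  have e: "\<And>\<omega> i. g2 \<omega> $ i * (w l \<omega> *\<^sub>R Zs \<omega>) $ i = (w l \<omega> *\<^sub>R g2 \<omega>) $ i * Zs \<omega> $ i" by simp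
  have p2: "integrable M (\<lambda>\<omega>. vcond_exp M (F l) (\<lambda>\<eta>. w l \<eta> *\<^sub>R Zs \<eta>) \<omega> \<bullet> g2 \<omega>)"
       "(\<integral>\<omega>. (w l \<omega> *\<^sub>R Zs \<omega>) \<bullet> g2 \<omega> \<partial>M) = (\<integral>\<omega>. vcond_exp M (F l) (\<lambda>\<eta>. w l \<eta> *\<^sub>R Zs \<eta>) \<omega> \<bullet> g2 \<omega> \<partial>M)"
    using vce_pull[OF g2(1) wZm, unfolded e, OF L2_prod_comp[OF wg2 Z]] by auto
  show "integrable M (\<lambda>\<omega>. vcond_exp M (F l) Zs \<omega> \<bullet> g1 \<omega> + vcond_exp M (F l) (\<lambda>\<eta>. w l \<eta> *\<^sub>R Zs \<eta>) \<omega> \<bullet> g2 \<omega>)"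
    using p1(1) p2(1) by simp
  have pt: "\<And>\<omega>. Zs \<omega> \<bullet> (g1 \<omega> + w l \<omega> *\<^sub>R g2 \<omega>) = Zs \<omega> \<bullet> g1 \<omega> + (w l \<omega> *\<^sub>R Zs \<omega>) \<bullet> g2 \<omega>"
    by (simp add: inner_add_right)
  have i1: "integrable M (\<lambda>\<omega>. Zs \<omega> \<bullet> g1 \<omega>)" using L2_inner[OF Z g1(2)] .
  have i2: "integrable M (\<lambda>\<omega>. (w l \<omega> *\<^sub>R Zs \<omega>) \<bullet> g2 \<omega>)" using L2_inner[OF Z wg2] by simp
  show "(\<integral>\<omega>. Zs \<omega> \<bullet> (g1 \<omega> + w l \<omega> *\<^sub>R g2 \<omega>) \<partial>M)
     = (\<integral>\<omega>. vcond_exp M (F l) Zs \<omega> \<bullet> g1 \<omega> + vcond_exp M (F l) (\<lambda>\<eta>. w l \<eta> *\<^sub>R Zs \<eta>) \<omega> \<bullet> g2 \<omega> \<partial>M)"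
    unfolding pt using i1 i2 p1 p2 by simp
qed


lemma sol_parts:
  assumes "fbsde_sol M x0 w N A B C D Q R G \<Phi> k y X Z"
  shows "\<And>l. l \<in> {k..N} \<Longrightarrow> L2 (X l) \<and> L2 (Z l)"
    "AE \<omega> in M. X k \<omega> = y \<omega>"
    "\<And>l. l \<in> {k..<N} \<Longrightarrow> AE \<omega> in M. X (Suc l) \<omega> = Ab k l *v X l \<omega> + w l \<omega> *\<^sub>R (Cb k l *v X l \<omega>)"
    "\<And>l. l \<in> {k..<N} \<Longrightarrow> AE \<omega> in M. Z l \<omega> =
          transpose (Ab k l) *v vcond_exp M (F l) (Z (Suc l)) \<omega>
          + transpose (Cb k l) *v vcond_exp M (F l) (\<lambda>\<eta>. w l \<eta> *\<^sub>R Z (Suc l) \<eta>) \<omega>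
          + Pm k l *v X l \<omega>"
    "AE \<omega> in M. Z N \<omega> = G k *v X N \<omega>"
  using assms unfolding fbsde_sol_def L2_def Ab_def Cb_def Pm_def by (auto simp: add.commute)

lemma X_ae:
  assumes sol: "fbsde_sol M x0 w N A B C D Q R G \<Phi> k y X Z"
  shows "l \<in> {k..N} \<Longrightarrow> AE \<omega> in M. X l \<omega> = X0 k y l \<omega>"
proof -
  have "k + d \<le> N \<Longrightarrow> AE \<omega> in M. X (k + d) \<omega> = X0 k y (k + d) \<omega>" for d
  proof (induction d)
    case 0
    then show ?case using sol_parts(2)[OF sol] by (simp add: cl_le)
  next
    case (Suc d)
    then have IH: "AE \<omega> in M. X (k + d) \<omega> = X0 k y (k + d) \<omega>" by simp
    have st: "AE \<omega> in M. X (Suc (k + d)) \<omega> = Ab k (k + d) *v X (k + d) \<omega> + w (k + d) \<omega> *\<^sub>R (Cb k (k + d) *v X (k + d) \<omega>)"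
      using sol_parts(3)[OF sol, of "k + d"] Suc.prems by simp
    show ?case using IH st
    proof eventually_elim
      case (elim \<omega>)
      then show ?case using X0_step[of k "k + d" y \<omega>] by simp
    qed
  qed
  moreover assume "l \<in> {k..N}"
  then obtain d where "l = k + d" "k + d \<le> N" by (metis atLeastAtMost_iff le_add_diff_inverse)
  ultimately show "AE \<omega> in M. X l \<omega> = X0 k y l \<omega>" by simp
qed

lemma crossB:
  assumes kN: "k < N" and y: "y \<in> borel_measurable (F k)" "L2 y" and u: "u \<in> borel_measurable (F k)" "L2 u"
    and sol: "fbsde_sol M x0 w N A B C D Q R G \<Phi> k y X Z"
  shows "Cross k y u = (\<integral>\<omega>. u \<omega> \<bullet> (R k k *v (\<Phi> k *v y \<omega>)
       + transpose (B k k) *v vcond_exp M (F k) (Z (Suc k)) \<omega>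
       + transpose (D k k) *v vcond_exp M (F k) (\<lambda>\<eta>. w k \<eta> *\<^sub>R Z (Suc k) \<eta>) \<omega>) \<partial>M)"
proof -
  let ?v0 = "\<lambda>\<omega>. \<Phi> k *v y \<omega>"
  have v0: "?v0 \<in> borel_measurable (F k)" "L2 ?v0" using y by (auto intro: mat_meas L2_mat)
  have z: "(\<lambda>\<omega>. 0::real^'n) \<in> borel_measurable (F k)" "L2 (\<lambda>\<omega>. 0::real^'n)" by (auto simp: L2_const)
  have XF: "\<And>l. k \<le> l \<Longrightarrow> X0 k y l \<in> borel_measurable (F l) \<and> L2 (X0 k y l)" using cl_F[OF y v0] by auto
  have YF: "\<And>l. k \<le> l \<Longrightarrow> Y k u l \<in> borel_measurable (F l) \<and> L2 (Y k u l)" using cl_F[OF z u] by auto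
  have ZL: "\<And>l. l \<in> {k..N} \<Longrightarrow> L2 (Z l)" and XL: "\<And>l. l \<in> {k..N} \<Longrightarrow> L2 (X l)"
    using sol_parts(1)[OF sol] by auto
  define a where "a l = (\<integral>\<omega>. Z l \<omega> \<bullet> Y k u l \<omega> \<partial>M)" for l
  have b2: "a (Suc l) = a l - (\<integral>\<omega>. (Pm k l *v X0 k y l \<omega>) \<bullet> Y k u l \<omega> \<partial>M)" if l: "k < l" "l < N" for l
  proof -
    have Yl: "Y k u l \<in> borel_measurable (F l)" "L2 (Y k u l)" using YF l by auto
    have g1: "(\<lambda>\<omega>. Ab k l *v Y k u l \<omega>) \<in> borel_measurable (F l)" "L2 (\<lambda>\<omega>. Ab k l *v Y k u l \<omega>)"
      using Yl by (auto intro: mat_meas L2_mat)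
    have g2: "(\<lambda>\<omega>. Cb k l *v Y k u l \<omega>) \<in> borel_measurable (F l)" "L2 (\<lambda>\<omega>. Cb k l *v Y k u l \<omega>)"
      using Yl by (auto intro: mat_meas L2_mat)
    have Zs: "L2 (Z (Suc l))" using ZL l by auto
    have Zl: "L2 (Z l)" using ZL l by auto
    have Xl: "L2 (X l)" "L2 (X0 k y l)" using XL XF l by auto
    let ?V1 = "vcond_exp M (F l) (Z (Suc l))"
    let ?V2 = "vcond_exp M (F l) (\<lambda>\<eta>. w l \<eta> *\<^sub>R Z (Suc l) \<eta>)"
    have "a (Suc l) = (\<integral>\<omega>. Z (Suc l) \<omega> \<bullet> (Ab k l *v Y k u l \<omega> + w l \<omega> *\<^sub>R (Cb k l *v Y k u l \<omega>)) \<partial>M)"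
      unfolding a_def using l by (simp add: Ab_def Cb_def)
    also have "\<dots> = (\<integral>\<omega>. ?V1 \<omega> \<bullet> (Ab k l *v Y k u l \<omega>) + ?V2 \<omega> \<bullet> (Cb k l *v Y k u l \<omega>) \<partial>M)"
      by (rule pull_step(2)[OF g1 g2 Zs])
    also have "\<dots> = (\<integral>\<omega>. (transpose (Ab k l) *v ?V1 \<omega> + transpose (Cb k l) *v ?V2 \<omega>) \<bullet> Y k u l \<omega> \<partial>M)"
      by (simp add: dot_mat inner_add_left del: transpose_matrix_vector)
    also have "\<dots> = (\<integral>\<omega>. (Z l \<omega> - Pm k l *v X0 k y l \<omega>) \<bullet> Y k u l \<omega> \<partial>M)"
    proof (rule integral_cong_AE)
      have [measurable]: "Y k u l \<in> borel_measurable M" using Yl(2) by (rule L2_meas)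
      show "(\<lambda>\<omega>. (transpose (Ab k l) *v ?V1 \<omega> + transpose (Cb k l) *v ?V2 \<omega>) \<bullet> Y k u l \<omega>) \<in> borel_measurable M"
        by measurable
      show "(\<lambda>\<omega>. (Z l \<omega> - Pm k l *v X0 k y l \<omega>) \<bullet> Y k u l \<omega>) \<in> borel_measurable M"
        using Yl Zl Xl by (auto dest: L2_meas)
      show "AE \<omega> in M. (transpose (Ab k l) *v ?V1 \<omega> + transpose (Cb k l) *v ?V2 \<omega>) \<bullet> Y k u l \<omega>
          = (Z l \<omega> - Pm k l *v X0 k y l \<omega>) \<bullet> Y k u l \<omega>"
      proof -
        have lk: "l \<in> {k..<N}" "l \<in> {k..N}" using l by auto
        show ?thesis using sol_parts(4)[OF sol lk(1)] X_ae[OF sol lk(2)]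
        proof eventually_elim
          case (elim \<omega>)
          then show ?case by (simp add: inner_diff_left inner_add_left del: transpose_matrix_vector)
        qed
      qed
    qed
    also have "\<dots> = a l - (\<integral>\<omega>. (Pm k l *v X0 k y l \<omega>) \<bullet> Y k u l \<omega> \<partial>M)"
      unfolding a_def inner_diff_left using L2_inner[OF Zl Yl(2)] cr_int[OF Xl(2) Yl(2)] by simp
    finally show ?thesis .
  qed
  have b3: "a N = (\<integral>\<omega>. (G k *v X0 k y N \<omega>) \<bullet> Y k u N \<omega> \<partial>M)"
    unfolding a_def
  proof (rule integral_cong_AE)
    have YN: "L2 (Y k u N)" using YF kN by auto
    have XN: "L2 (X0 k y N)" using XF kN by auto
    show "(\<lambda>\<omega>. Z N \<omega> \<bullet> Y k u N \<omega>) \<in> borel_measurable M" using YN ZL[of N] kN by (auto dest: L2_meas)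
    show "(\<lambda>\<omega>. (G k *v X0 k y N \<omega>) \<bullet> Y k u N \<omega>) \<in> borel_measurable M" using YN XN by (auto dest: L2_meas)
    show "AE \<omega> in M. Z N \<omega> \<bullet> Y k u N \<omega> = (G k *v X0 k y N \<omega>) \<bullet> Y k u N \<omega>"
    proof -
      have "N \<in> {k..N}" using kN by simp
      then show ?thesis using sol_parts(5)[OF sol] X_ae[OF sol, of N] by (auto elim: AE_mp)
    qed
  qed
  have b4: "a (Suc k) = (\<integral>\<omega>. u \<omega> \<bullet> (transpose (B k k) *v vcond_exp M (F k) (Z (Suc k)) \<omega>
       + transpose (D k k) *v vcond_exp M (F k) (\<lambda>\<eta>. w k \<eta> *\<^sub>R Z (Suc k) \<eta>) \<omega>) \<partial>M)"
  proof -
    have g1: "(\<lambda>\<omega>. B k k *v u \<omega>) \<in> borel_measurable (F k)" "L2 (\<lambda>\<omega>. B k k *v u \<omega>)"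
      using u by (auto intro: mat_meas L2_mat)
    have g2: "(\<lambda>\<omega>. D k k *v u \<omega>) \<in> borel_measurable (F k)" "L2 (\<lambda>\<omega>. D k k *v u \<omega>)"
      using u by (auto intro: mat_meas L2_mat)
    have Zs: "L2 (Z (Suc k))" using ZL kN by auto
    let ?V1 = "vcond_exp M (F k) (Z (Suc k))"
    let ?V2 = "vcond_exp M (F k) (\<lambda>\<eta>. w k \<eta> *\<^sub>R Z (Suc k) \<eta>)"
    have "a (Suc k) = (\<integral>\<omega>. Z (Suc k) \<omega> \<bullet> (B k k *v u \<omega> + w k \<omega> *\<^sub>R (D k k *v u \<omega>)) \<partial>M)"
      unfolding a_def by (simp add: cl_Suc_k)
    also have "\<dots> = (\<integral>\<omega>. ?V1 \<omega> \<bullet> (B k k *v u \<omega>) + ?V2 \<omega> \<bullet> (D k k *v u \<omega>) \<partial>M)"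
      by (rule pull_step(2)[OF g1 g2 Zs])
    also have "\<dots> = (\<integral>\<omega>. u \<omega> \<bullet> (transpose (B k k) *v ?V1 \<omega> + transpose (D k k) *v ?V2 \<omega>) \<partial>M)"
      by (simp add: dot_mat inner_add_right inner_commute del: transpose_matrix_vector)
    finally show ?thesis .
  qed
  have tel: "(\<Sum>l=Suc k..<N. \<integral>\<omega>. (Pm k l *v X0 k y l \<omega>) \<bullet> Y k u l \<omega> \<partial>M) = a (Suc k) - a N"
  proof -
    have "(\<Sum>l=Suc k..<N. \<integral>\<omega>. (Pm k l *v X0 k y l \<omega>) \<bullet> Y k u l \<omega> \<partial>M) = (\<Sum>l=Suc k..<N. - (a (Suc l) - a l))"
      by (rule sum.cong) (auto simp: b2)
    also have "\<dots> = - (a N - a (Suc k))"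
    proof -
      have "(\<Sum>l=Suc k..<N. a (Suc l) - a l) = a N - a (Suc k)" using kN by (intro sum_Suc_diff') simp
      then show ?thesis by (simp only: sum_negf)
    qed
    finally show ?thesis by simp
  qed
  have i1: "integrable M (\<lambda>\<omega>. u \<omega> \<bullet> (R k k *v (\<Phi> k *v y \<omega>)))"
    using L2_inner[OF u(2) L2_mat[OF v0(2)]] .
  have i2: "integrable M (\<lambda>\<omega>. u \<omega> \<bullet> (transpose (B k k) *v vcond_exp M (F k) (Z (Suc k)) \<omega>
       + transpose (D k k) *v vcond_exp M (F k) (\<lambda>\<eta>. w k \<eta> *\<^sub>R Z (Suc k) \<eta>) \<omega>))"
  proof -
    have g1: "(\<lambda>\<omega>. B k k *v u \<omega>) \<in> borel_measurable (F k)" "L2 (\<lambda>\<omega>. B k k *v u \<omega>)"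
      using u by (auto intro: mat_meas L2_mat)
    have g2: "(\<lambda>\<omega>. D k k *v u \<omega>) \<in> borel_measurable (F k)" "L2 (\<lambda>\<omega>. D k k *v u \<omega>)"
      using u by (auto intro: mat_meas L2_mat)
    have Zs: "L2 (Z (Suc k))" using ZL kN by auto
    show ?thesis using pull_step(1)[OF g1 g2 Zs]
      by (simp add: dot_mat inner_add_right inner_commute del: transpose_matrix_vector)
  qed
  let ?T = "\<lambda>\<omega>. transpose (B k k) *v vcond_exp M (F k) (Z (Suc k)) \<omega>
       + transpose (D k k) *v vcond_exp M (F k) (\<lambda>\<eta>. w k \<eta> *\<^sub>R Z (Suc k) \<eta>) \<omega>"
  have e: "(\<lambda>\<omega>. u \<omega> \<bullet> (R k k *v (\<Phi> k *v y \<omega>) + transpose (B k k) *v vcond_exp M (F k) (Z (Suc k)) \<omega>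
       + transpose (D k k) *v vcond_exp M (F k) (\<lambda>\<eta>. w k \<eta> *\<^sub>R Z (Suc k) \<eta>) \<omega>))
     = (\<lambda>\<omega>. u \<omega> \<bullet> (R k k *v (\<Phi> k *v y \<omega>)) + u \<omega> \<bullet> ?T \<omega>)"
    by (rule ext) (simp only: add.assoc inner_add_right)
  have split: "(\<integral>\<omega>. u \<omega> \<bullet> (R k k *v (\<Phi> k *v y \<omega>) + transpose (B k k) *v vcond_exp M (F k) (Z (Suc k)) \<omega>
       + transpose (D k k) *v vcond_exp M (F k) (\<lambda>\<eta>. w k \<eta> *\<^sub>R Z (Suc k) \<eta>) \<omega>) \<partial>M)
     = (\<integral>\<omega>. u \<omega> \<bullet> (R k k *v (\<Phi> k *v y \<omega>)) \<partial>M) + (\<integral>\<omega>. u \<omega> \<bullet> ?T \<omega> \<partial>M)"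
    unfolding e by (rule Bochner_Integration.integral_add[OF i1 i2])
  have c1: "(\<integral>\<omega>. (R k k *v (\<Phi> k *v y \<omega>)) \<bullet> u \<omega> \<partial>M) = (\<integral>\<omega>. u \<omega> \<bullet> (R k k *v (\<Phi> k *v y \<omega>)) \<partial>M)"
    by (simp only: inner_commute)
  show ?thesis unfolding Cross_def tel b3[symmetric] split c1 b4 by simp
qed


lemma ce_step:
  assumes a: "a \<in> borel_measurable (F l)" "L2 a" and b: "b \<in> borel_measurable (F l)" "L2 b"
  shows "AE \<omega> in M. vcond_exp M (F l) (\<lambda>\<eta>. (a \<eta> :: real^'a) + w l \<eta> *\<^sub>R b \<eta>) \<omega> = a \<omega>"
    "AE \<omega> in M. vcond_exp M (F l) (\<lambda>\<eta>. w l \<eta> *\<^sub>R ((a \<eta> :: real^'a) + w l \<eta> *\<^sub>R b \<eta>)) \<omega> = b \<omega>"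
proof -
  interpret S: sigma_finite_subalgebra M "F l" by (rule sfs)
  have am: "\<And>i. (\<lambda>\<eta>. a \<eta> $ i) \<in> borel_measurable (F l)" using a(1) vec_comp_meas by blast
  have bm: "\<And>i. (\<lambda>\<eta>. b \<eta> $ i) \<in> borel_measurable (F l)" using b(1) vec_comp_meas by blast
  have ai: "\<And>i. integrable M (\<lambda>\<eta>. a \<eta> $ i)" using a(2) L2_comp by blast
  have bi: "\<And>i. integrable M (\<lambda>\<eta>. b \<eta> $ i)" using b(2) L2_comp by blast
  have wbi: "\<And>i. integrable M (\<lambda>\<eta>. b \<eta> $ i * w l \<eta>)"
    using L2_comp[OF L2_w[OF b]] by (simp add: mult.commute)
  have wai: "\<And>i. integrable M (\<lambda>\<eta>. a \<eta> $ i * w l \<eta>)"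
    using L2_comp[OF L2_w[OF a]] by (simp add: mult.commute)
  have wwbi: "integrable M (\<lambda>\<eta>. b \<eta> $ i * (w l \<eta>)\<^sup>2)" for i
  proof -
    have m: "(\<lambda>\<eta>. \<bar>b \<eta> $ i\<bar>) \<in> borel_measurable (F l)" using bm by measurable
    have "integrable M (\<lambda>\<eta>. \<bar>b \<eta> $ i\<bar> * (w l \<eta>)\<^sup>2)"
      by (rule mom[OF m]) (use bi in auto)
    have bM[measurable]: "(\<lambda>\<eta>. b \<eta> $ i) \<in> borel_measurable M" using FM[OF bm[of i]] .
    show ?thesis
    proof (rule Bochner_Integration.integrable_bound[OF \<open>integrable M (\<lambda>\<eta>. \<bar>b \<eta> $ i\<bar> * (w l \<eta>)\<^sup>2)\<close>])
      show "(\<lambda>\<eta>. b \<eta> $ i * (w l \<eta>)\<^sup>2) \<in> borel_measurable M" by measurable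
    qed (simp add: abs_mult)
  qed
  have wM[measurable]: "w l \<in> borel_measurable M" by simp
  have c1: "AE \<omega> in M. real_cond_exp M (F l) (\<lambda>\<eta>. a \<eta> $ i + w l \<eta> * b \<eta> $ i) \<omega> = a \<omega> $ i" for i
  proof -
    have e: "(\<lambda>\<eta>. a \<eta> $ i + w l \<eta> * b \<eta> $ i) = (\<lambda>\<eta>. a \<eta> $ i + b \<eta> $ i * w l \<eta>)" by (simp add: mult.commute)
    show ?thesis unfolding e
      using S.real_cond_exp_add[OF ai wbi, of i i] S.real_cond_exp_F_meas[OF ai am, of i]
        S.real_cond_exp_mult[OF bm wM wbi, of i] w0[of l]
      by eventually_elim simp
  qed
  have c2: "AE \<omega> in M. real_cond_exp M (F l) (\<lambda>\<eta>. w l \<eta> * (a \<eta> $ i + w l \<eta> * b \<eta> $ i)) \<omega> = b \<omega> $ i" for i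
  proof -
    have e: "(\<lambda>\<eta>. w l \<eta> * (a \<eta> $ i + w l \<eta> * b \<eta> $ i)) = (\<lambda>\<eta>. a \<eta> $ i * w l \<eta> + b \<eta> $ i * (w l \<eta>)\<^sup>2)"
      by (simp add: algebra_simps power2_eq_square)
    have w2m: "(\<lambda>\<eta>. (w l \<eta>)\<^sup>2) \<in> borel_measurable M" by measurable
    show ?thesis unfolding e
      using S.real_cond_exp_add[OF wai wwbi, of i i] S.real_cond_exp_mult[OF am wM wai, of i]
        S.real_cond_exp_mult[OF bm w2m wwbi, of i] w0[of l] w1[of l]
      by eventually_elim simp
  qed
  show "AE \<omega> in M. vcond_exp M (F l) (\<lambda>\<eta>. (a \<eta> :: real^'a) + w l \<eta> *\<^sub>R b \<eta>) \<omega> = a \<omega>"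
    using eventually_all_finite[OF c1] by eventually_elim (simp add: vec_eq_iff)
  show "AE \<omega> in M. vcond_exp M (F l) (\<lambda>\<eta>. w l \<eta> *\<^sub>R ((a \<eta> :: real^'a) + w l \<eta> *\<^sub>R b \<eta>)) \<omega> = b \<omega>"
    using eventually_all_finite[OF c2] by eventually_elim (simp add: vec_eq_iff)
qed


primrec PrR :: "nat \<Rightarrow> nat \<Rightarrow> real^'n^'n" where
  "PrR k 0 = G k"
| "PrR k (Suc j) = transpose (Ab k (N - Suc j)) ** PrR k j ** Ab k (N - Suc j)
     + transpose (Cb k (N - Suc j)) ** PrR k j ** Cb k (N - Suc j) + Pm k (N - Suc j)"

definition "Pr k l = PrR k (N - l)"

lemma Pr_N: "Pr k N = G k"
  by (simp add: Pr_def)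

lemma Pr_step: "l < N \<Longrightarrow> Pr k l = transpose (Ab k l) ** Pr k (Suc l) ** Ab k l
     + transpose (Cb k l) ** Pr k (Suc l) ** Cb k l + Pm k l"
proof -
  assume l: "l < N"
  then have e: "N - l = Suc (N - Suc l)" by simp
  have e2: "N - Suc (N - Suc l) = l" using l by simp
  show ?thesis unfolding Pr_def e PrR.simps e2 ..
qed

definition "Zc k y l = (\<lambda>\<omega>. Pr k l *v X0 k y l \<omega>)"

lemma ce_Z:
  assumes kl: "k \<le> l" and y: "y \<in> borel_measurable (F k)" "L2 y"
  shows "AE \<omega> in M. vcond_exp M (F l) (Zc k y (Suc l)) \<omega> = Pr k (Suc l) *v (Ab k l *v X0 k y l \<omega>)"
    "AE \<omega> in M. vcond_exp M (F l) (\<lambda>\<eta>. w l \<eta> *\<^sub>R Zc k y (Suc l) \<eta>) \<omega> = Pr k (Suc l) *v (Cb k l *v X0 k y l \<omega>)"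
proof -
  have v0: "(\<lambda>\<omega>. \<Phi> k *v y \<omega>) \<in> borel_measurable (F k)" "L2 (\<lambda>\<omega>. \<Phi> k *v y \<omega>)" using y by (auto intro: mat_meas L2_mat)
  have X: "X0 k y l \<in> borel_measurable (F l)" "L2 (X0 k y l)" using cl_F[OF y v0 kl] by auto
  let ?a = "\<lambda>\<omega>. Pr k (Suc l) *v (Ab k l *v X0 k y l \<omega>)"
  let ?b = "\<lambda>\<omega>. Pr k (Suc l) *v (Cb k l *v X0 k y l \<omega>)"
  have a: "?a \<in> borel_measurable (F l)" "L2 ?a" using X by (auto intro!: mat_meas L2_mat)
  have b: "?b \<in> borel_measurable (F l)" "L2 ?b" using X by (auto intro!: mat_meas L2_mat)
  have e: "Zc k y (Suc l) = (\<lambda>\<eta>. ?a \<eta> + w l \<eta> *\<^sub>R ?b \<eta>)"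
    unfolding Zc_def X0_step[OF kl] by (simp only: matrix_vector_right_distrib matrix_vector_mult_scaleR)
  show "AE \<omega> in M. vcond_exp M (F l) (Zc k y (Suc l)) \<omega> = Pr k (Suc l) *v (Ab k l *v X0 k y l \<omega>)"
    unfolding e by (rule ce_step(1)[OF a b])
  show "AE \<omega> in M. vcond_exp M (F l) (\<lambda>\<eta>. w l \<eta> *\<^sub>R Zc k y (Suc l) \<eta>) \<omega> = Pr k (Suc l) *v (Cb k l *v X0 k y l \<omega>)"
    unfolding e by (rule ce_step(2)[OF a b])
qed

lemma Zsol:
  assumes kN: "k < N" and y: "y \<in> borel_measurable (F k)" "L2 y"
  shows "fbsde_sol M x0 w N A B C D Q R G \<Phi> k y (X0 k y) (Zc k y)"
proof -
  have v0: "(\<lambda>\<omega>. \<Phi> k *v y \<omega>) \<in> borel_measurable (F k)" "L2 (\<lambda>\<omega>. \<Phi> k *v y \<omega>)" using y by (auto intro: mat_meas L2_mat)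
  have X: "\<And>l. k \<le> l \<Longrightarrow> L2 (X0 k y l)" using cl_F[OF y v0] by auto
  have P1: "\<forall>l\<in>{k..N}. X0 k y l \<in> borel_measurable M \<and> Zc k y l \<in> borel_measurable M
        \<and> integrable M (\<lambda>\<omega>. (norm (X0 k y l \<omega>))\<^sup>2) \<and> integrable M (\<lambda>\<omega>. (norm (Zc k y l \<omega>))\<^sup>2)"
  proof
    fix l assume "l \<in> {k..N}"
    then have "L2 (X0 k y l)" "L2 (Zc k y l)" using X unfolding Zc_def by (auto intro: L2_mat)
    then show "X0 k y l \<in> borel_measurable M \<and> Zc k y l \<in> borel_measurable M
        \<and> integrable M (\<lambda>\<omega>. (norm (X0 k y l \<omega>))\<^sup>2) \<and> integrable M (\<lambda>\<omega>. (norm (Zc k y l \<omega>))\<^sup>2)"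
      unfolding L2_def by auto
  qed
  have P2: "AE \<omega> in M. X0 k y k \<omega> = y \<omega>" by (simp add: cl_le)
  have P3: "\<forall>l\<in>{k..<N}. AE \<omega> in M. X0 k y (Suc l) \<omega> =
          (A k l + B k l ** \<Phi> l) *v X0 k y l \<omega> + w l \<omega> *\<^sub>R ((C k l + D k l ** \<Phi> l) *v X0 k y l \<omega>)"
  proof (intro ballI AE_I2)
    fix l \<omega> assume "l \<in> {k..<N}"
    then have "k \<le> l" by simp
    then show "X0 k y (Suc l) \<omega> =
          (A k l + B k l ** \<Phi> l) *v X0 k y l \<omega> + w l \<omega> *\<^sub>R ((C k l + D k l ** \<Phi> l) *v X0 k y l \<omega>)"
      by (simp only: X0_step Ab_def Cb_def)
  qed
  have P4: "\<forall>l\<in>{k..<N}. AE \<omega> in M. Zc k y l \<omega> =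
          transpose (A k l + B k l ** \<Phi> l) *v vcond_exp M (Fp M x0 w l) (Zc k y (Suc l)) \<omega>
          + transpose (C k l + D k l ** \<Phi> l) *v vcond_exp M (Fp M x0 w l) (\<lambda>\<eta>. w l \<eta> *\<^sub>R Zc k y (Suc l) \<eta>) \<omega>
          + (transpose (\<Phi> l) ** R k l ** \<Phi> l + Q k l) *v X0 k y l \<omega>"
  proof
    fix l assume l: "l \<in> {k..<N}"
    show "AE \<omega> in M. Zc k y l \<omega> =
          transpose (A k l + B k l ** \<Phi> l) *v vcond_exp M (Fp M x0 w l) (Zc k y (Suc l)) \<omega>
          + transpose (C k l + D k l ** \<Phi> l) *v vcond_exp M (Fp M x0 w l) (\<lambda>\<eta>. w l \<eta> *\<^sub>R Zc k y (Suc l) \<eta>) \<omega>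
          + (transpose (\<Phi> l) ** R k l ** \<Phi> l + Q k l) *v X0 k y l \<omega>"
    proof -
      have lk: "k \<le> l" "l < N" using l by auto
      show ?thesis using ce_Z(1)[OF lk(1) y] ce_Z(2)[OF lk(1) y]
      proof eventually_elim
        case (elim \<omega>)
        have zl: "Zc k y l \<omega> = Pr k l *v X0 k y l \<omega>" by (simp only: Zc_def)
        show ?case unfolding Ab_def[symmetric] Cb_def[symmetric] elim zl Pr_step[OF lk(2)] Pm_def
          by (simp add: matrix_vector_mult_add_rdistrib matrix_vector_mul_assoc matrix_mul_assoc
             algebra_simps del: transpose_matrix_vector)
      qed
    qed
  qed
  have P5: "AE \<omega> in M. Zc k y N \<omega> = G k *v X0 k y N \<omega>" by (simp add: Zc_def Pr_N)
  show ?thesis unfolding fbsde_sol_def using P1 P2 P3 P4 P5 by blast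
qed


lemma L2F_iff: "L2F M x0 w k v \<longleftrightarrow> v \<in> borel_measurable (F k) \<and> L2 v"
  unfolding L2F_def L2_def using FM by blast

lemma Jv_def': "Jv k y v = lq_cost M N A B C D Q R G w k y (fb_control \<Phi> k v (cl_state A B C D w \<Phi> k y v))"
  by (simp add: Jv_def)

lemma Quad_expr: "(\<integral>\<omega>. qf (R k k) (ub \<omega>) \<partial>M)
             + (\<Sum>l=k..<N. \<integral>\<omega>. qf (Q k l + transpose (\<Phi> l) ** R k l ** \<Phi> l)
                                   (cl_state A B C D w \<Phi> k (\<lambda>\<omega>. 0) ub l \<omega>) \<partial>M)
             + (\<integral>\<omega>. qf (G k) (cl_state A B C D w \<Phi> k (\<lambda>\<omega>. 0) ub N \<omega>) \<partial>M) = Quad k ub"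
  by (simp add: Quad_def Pm_def)

lemma ii_to_i:
  assumes ii: "cond_ii M x0 w N A B C D Q R G \<Phi>"
  shows "is_lfes M x0 w N A B C D Q R G \<Phi>"
  unfolding is_lfes_def Let_def Jv_def'[symmetric]
proof (intro allI impI ballI)
  fix t k and x :: "real^'n" and v :: "'w \<Rightarrow> real^'m"
  assume tN: "t < N" and k: "k \<in> {t..<N}" and v: "L2F M x0 w k v"
  let ?y = "eq_state A B C D w \<Phi> t x k"
  have kN: "k < N" using k by simp
  have y: "?y \<in> borel_measurable (F k)" "L2 ?y" using eq_F by auto
  have vv: "v \<in> borel_measurable (F k)" "L2 v" using v L2F_iff by auto
  have v0: "(\<lambda>\<omega>. \<Phi> k *v ?y \<omega>) \<in> borel_measurable (F k)" "L2 (\<lambda>\<omega>. \<Phi> k *v ?y \<omega>)"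
    using y by (auto intro: mat_meas L2_mat)
  define u where "u = (\<lambda>\<omega>. v \<omega> - \<Phi> k *v ?y \<omega>)"
  have u: "u \<in> borel_measurable (F k)" "L2 u" unfolding u_def using vv v0 by (auto intro: L2_diff)
  have ve: "v = (\<lambda>\<omega>. \<Phi> k *v ?y \<omega> + u \<omega>)" unfolding u_def by simp
  from ii tN k obtain X Z where sol: "fbsde_sol M x0 w N A B C D Q R G \<Phi> k ?y X Z"
    and st: "AE \<omega> in M. 0 = R k k *v (\<Phi> k *v X k \<omega>)
              + transpose (B k k) *v vcond_exp M (Fp M x0 w k) (Z (Suc k)) \<omega>
              + transpose (D k k) *v vcond_exp M (Fp M x0 w k) (\<lambda>\<eta>. w k \<eta> *\<^sub>R Z (Suc k) \<eta>) \<omega>"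
    and cv: "(INF ub \<in> {u. L2F M x0 w k u}.
           ereal ((\<integral>\<omega>. qf (R k k) (ub \<omega>) \<partial>M)
             + (\<Sum>l=k..<N. \<integral>\<omega>. qf (Q k l + transpose (\<Phi> l) ** R k l ** \<Phi> l)
                                   (cl_state A B C D w \<Phi> k (\<lambda>\<omega>. 0) ub l \<omega>) \<partial>M)
             + (\<integral>\<omega>. qf (G k) (cl_state A B C D w \<Phi> k (\<lambda>\<omega>. 0) ub N \<omega>) \<partial>M))) \<ge> 0"
    unfolding cond_ii_def by blast
  have cv': "(INF ub \<in> {u. L2F M x0 w k u}. ereal (Quad k ub)) \<ge> 0" using cv unfolding Quad_expr .
  have "ereal (Quad k u) \<ge> (INF ub \<in> {u. L2F M x0 w k u}. ereal (Quad k ub))"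
    by (rule INF_lower) (use u L2F_iff in auto)
  with cv' have "0 \<le> ereal (Quad k u)" by (rule order_trans)
  then have Qpos: "Quad k u \<ge> 0" by simp
  let ?S = "\<lambda>\<omega>. R k k *v (\<Phi> k *v ?y \<omega>)
       + transpose (B k k) *v vcond_exp M (F k) (Z (Suc k)) \<omega>
       + transpose (D k k) *v vcond_exp M (F k) (\<lambda>\<eta>. w k \<eta> *\<^sub>R Z (Suc k) \<eta>) \<omega>"
  have Zm: "Z (Suc k) \<in> borel_measurable M" using sol_parts(1)[OF sol, of "Suc k"] kN by (auto dest: L2_meas)
  have "Cross k ?y u = (\<integral>\<omega>. u \<omega> \<bullet> ?S \<omega> \<partial>M)" by (rule crossB[OF kN y u sol])
  also have "\<dots> = (\<integral>\<omega>. 0 \<partial>M)"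
  proof (rule integral_cong_AE)
    have [measurable]: "u \<in> borel_measurable M" "?y \<in> borel_measurable M" using u y by (auto dest: L2_meas)
    show "(\<lambda>\<omega>. u \<omega> \<bullet> ?S \<omega>) \<in> borel_measurable M" by measurable
    show "(\<lambda>\<omega>. 0::real) \<in> borel_measurable M" by simp
    show "AE \<omega> in M. u \<omega> \<bullet> ?S \<omega> = 0" using st sol_parts(2)[OF sol]
      by eventually_elim (simp del: transpose_matrix_vector)
  qed
  finally have C0: "Cross k ?y u = 0" by simp
  show "Jv k ?y (\<lambda>\<omega>. \<Phi> k *v ?y \<omega>) \<le> Jv k ?y v"
    unfolding ve decompA[OF kN y u] C0 using Qpos by simp
qed


lemma real_aux:
  fixes E q :: real
  assumes E: "0 \<le> E" and h: "\<And>t. 0 < t \<Longrightarrow> 2 * t * E \<le> t\<^sup>2 * q"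
  shows "E = 0"
proof (rule ccontr)
  assume "E \<noteq> 0"
  with E have Ep: "0 < E" by simp
  define t where "t = E / (\<bar>q\<bar> + 1)"
  have tp: "0 < t" unfolding t_def using Ep by (simp add: add_pos_nonneg)
  have "t * (2 * E) \<le> t * (t * \<bar>q\<bar>)"
  proof -
    have "t * (2 * E) = 2 * t * E" by simp
    also have "\<dots> \<le> t\<^sup>2 * q" by (rule h[OF tp])
    also have "\<dots> \<le> t\<^sup>2 * \<bar>q\<bar>" by (rule mult_left_mono) auto
    finally show ?thesis by (simp add: power2_eq_square)
  qed
  then have a: "2 * E \<le> t * \<bar>q\<bar>" using tp by (rule mult_left_le_imp_le)
  have "t * \<bar>q\<bar> < E"
  proof -
    have "t * \<bar>q\<bar> = E * (\<bar>q\<bar> / (\<bar>q\<bar> + 1))" unfolding t_def by simp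
    also have "\<dots> < E * 1" by (rule mult_strict_left_mono) (use Ep in auto)
    finally show ?thesis by simp
  qed
  with a Ep show False by simp
qed

lemma i_to_ii:
  assumes i: "is_lfes M x0 w N A B C D Q R G \<Phi>"
  shows "cond_ii M x0 w N A B C D Q R G \<Phi>"
  unfolding cond_ii_def Quad_expr
proof (intro allI impI ballI conjI)
  fix t k and x :: "real^'n"
  assume tN: "t < N" and k: "k \<in> {t..<N}"
  let ?y = "eq_state A B C D w \<Phi> t x k"
  have kN: "k < N" using k by simp
  have y: "?y \<in> borel_measurable (F k)" "L2 ?y" using eq_F by auto
  have v0: "(\<lambda>\<omega>. \<Phi> k *v ?y \<omega>) \<in> borel_measurable (F k)" "L2 (\<lambda>\<omega>. \<Phi> k *v ?y \<omega>)"
    using y by (auto intro: mat_meas L2_mat)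
  have opt: "\<And>v. L2F M x0 w k v \<Longrightarrow> Jv k ?y (\<lambda>\<omega>. \<Phi> k *v ?y \<omega>) \<le> Jv k ?y v"
    using i tN k unfolding is_lfes_def Let_def Jv_def'[symmetric] by blast
  have key: "0 \<le> 2 * Cross k ?y u + Quad k u" if u: "u \<in> borel_measurable (F k)" "L2 u" for u
  proof -
    have "L2F M x0 w k (\<lambda>\<omega>. \<Phi> k *v ?y \<omega> + u \<omega>)"
      unfolding L2F_iff using u v0 by (auto intro: F_add L2_add)
    from opt[OF this] show ?thesis unfolding decompA[OF kN y u] by simp
  qed
  have sol: "fbsde_sol M x0 w N A B C D Q R G \<Phi> k ?y (X0 k ?y) (Zc k ?y)" by (rule Zsol[OF kN y])
  let ?S = "\<lambda>\<omega>. R k k *v (\<Phi> k *v ?y \<omega>)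
       + transpose (B k k) *v vcond_exp M (F k) (Zc k ?y (Suc k)) \<omega>
       + transpose (D k k) *v vcond_exp M (F k) (\<lambda>\<eta>. w k \<eta> *\<^sub>R Zc k ?y (Suc k) \<eta>) \<omega>"
  define Sy where "Sy = (\<lambda>\<omega>. R k k *v (\<Phi> k *v ?y \<omega>)
       + transpose (B k k) *v (Pr k (Suc k) *v (Ab k k *v ?y \<omega>))
       + transpose (D k k) *v (Pr k (Suc k) *v (Cb k k *v ?y \<omega>)))"
  have SyF: "Sy \<in> borel_measurable (F k)" "L2 Sy" unfolding Sy_def using y
    by (auto intro!: F_add mat_meas L2_add L2_mat simp del: transpose_matrix_vector)
  have SyM[measurable]: "Sy \<in> borel_measurable M" using SyF by (auto dest: L2_meas)
  have SAE: "AE \<omega> in M. ?S \<omega> = Sy \<omega>"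
    using ce_Z(1)[OF le_refl y] ce_Z(2)[OF le_refl y]
    by eventually_elim (simp add: Sy_def cl_le del: transpose_matrix_vector)
  have crossS: "Cross k ?y u = (\<integral>\<omega>. u \<omega> \<bullet> Sy \<omega> \<partial>M)" if u: "u \<in> borel_measurable (F k)" "L2 u" for u
  proof -
    have [measurable]: "u \<in> borel_measurable M" "?y \<in> borel_measurable M" using u y by (auto dest: L2_meas)
    have "Cross k ?y u = (\<integral>\<omega>. u \<omega> \<bullet> ?S \<omega> \<partial>M)" by (rule crossB[OF kN y u sol])
    also have "\<dots> = (\<integral>\<omega>. u \<omega> \<bullet> Sy \<omega> \<partial>M)"
      by (rule integral_cong_AE) (measurable, use SAE in \<open>auto elim: AE_mp\<close>)
    finally show ?thesis .
  qed
  define E where "E = (\<integral>\<omega>. Sy \<omega> \<bullet> Sy \<omega> \<partial>M)"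
  have E0: "E = 0"
  proof (rule real_aux)
    show "0 \<le> E" unfolding E_def by (rule integral_nonneg_AE) simp
    fix s :: real assume s: "0 < s"
    let ?u = "\<lambda>\<omega>. (- s) *\<^sub>R Sy \<omega>"
    have u: "?u \<in> borel_measurable (F k)" "L2 ?u" using SyF(1) L2_scale[OF SyF(2), of "- s"] by auto
    have "Cross k ?y ?u = - s * E" unfolding crossS[OF u] E_def by simp
    moreover have "Quad k ?u = s\<^sup>2 * Quad k Sy" using Quad_scale[of k "- s" Sy] by simp
    ultimately show "2 * s * E \<le> s\<^sup>2 * Quad k Sy" using key[OF u] by simp
  qed
  have Sy0: "AE \<omega> in M. Sy \<omega> = 0"
  proof -
    have "AE \<omega> in M. Sy \<omega> \<bullet> Sy \<omega> = 0"
      using E0 unfolding E_def by (subst (asm) integral_nonneg_eq_0_iff_AE) (auto intro: L2_inner SyF)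
    then show ?thesis by eventually_elim simp
  qed
  show "\<exists>X Z. fbsde_sol M x0 w N A B C D Q R G \<Phi> k ?y X Z
         \<and> (AE \<omega> in M. 0 = R k k *v (\<Phi> k *v X k \<omega>)
              + transpose (B k k) *v vcond_exp M (Fp M x0 w k) (Z (Suc k)) \<omega>
              + transpose (D k k) *v vcond_exp M (Fp M x0 w k) (\<lambda>\<eta>. w k \<eta> *\<^sub>R Z (Suc k) \<eta>) \<omega>)"
  proof (intro exI conjI)
    show "fbsde_sol M x0 w N A B C D Q R G \<Phi> k ?y (X0 k ?y) (Zc k ?y)" by (rule sol)
    show "AE \<omega> in M. 0 = R k k *v (\<Phi> k *v X0 k ?y k \<omega>)
              + transpose (B k k) *v vcond_exp M (Fp M x0 w k) (Zc k ?y (Suc k)) \<omega>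
              + transpose (D k k) *v vcond_exp M (Fp M x0 w k) (\<lambda>\<eta>. w k \<eta> *\<^sub>R Zc k ?y (Suc k) \<eta>) \<omega>"
      using SAE Sy0 by eventually_elim (simp add: cl_le del: transpose_matrix_vector)
  qed
  show "(INF ub \<in> {u. L2F M x0 w k u}. ereal (Quad k ub)) \<ge> 0"
  proof (rule INF_greatest)
    fix ub :: "'w \<Rightarrow> real^'m" assume "ub \<in> {u. L2F M x0 w k u}"
    then have u: "ub \<in> borel_measurable (F k)" "L2 ub" using L2F_iff by auto
    have [measurable]: "ub \<in> borel_measurable M" using u by (auto dest: L2_meas)
    have "Cross k ?y ub = (\<integral>\<omega>. 0 \<partial>M)" unfolding crossS[OF u]
      by (rule integral_cong_AE) (measurable, use Sy0 in \<open>auto elim: AE_mp\<close>)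
    then show "0 \<le> ereal (Quad k ub)" using key[OF u] by simp
  qed
qed

lemma equiv: "is_lfes M x0 w N A B C D Q R G \<Phi> \<longleftrightarrow> cond_ii M x0 w N A B C D Q R G \<Phi>"
  using i_to_ii ii_to_i by blast

end

theorem theorem3p1:
  fixes M :: "'w measure" and x0 :: "'w \<Rightarrow> real^'n" and w :: "nat \<Rightarrow> 'w \<Rightarrow> real"
    and N :: nat
    and A C Q :: "nat \<Rightarrow> nat \<Rightarrow> real^'n^'n" and B D :: "nat \<Rightarrow> nat \<Rightarrow> real^'m^'n"
    and R :: "nat \<Rightarrow> nat \<Rightarrow> real^'m^'m" and G :: "nat \<Rightarrow> real^'n^'n"
  assumes "prob_space M"
    and "0 < N"
    and "x0 \<in> borel_measurable M"
    and "\<And>k. w k \<in> borel_measurable M"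
    and "\<And>k. integrable M (\<lambda>\<omega>. (w k \<omega>)\<^sup>2)"
    and "\<And>k. AE \<omega> in M. real_cond_exp M (Fp M x0 w k) (w k) \<omega> = 0"
    and "\<And>k. AE \<omega> in M. real_cond_exp M (Fp M x0 w k) (\<lambda>\<eta>. (w k \<eta>)\<^sup>2) \<omega> = 1"
    and "\<And>t k. t < N \<Longrightarrow> t \<le> k \<Longrightarrow> k < N \<Longrightarrow> transpose (Q t k) = Q t k"
    and "\<And>t k. t < N \<Longrightarrow> t \<le> k \<Longrightarrow> k < N \<Longrightarrow> transpose (R t k) = R t k"
    and "\<And>t. t < N \<Longrightarrow> transpose (G t) = G t"
  shows "(\<exists>\<Phi>. is_lfes M x0 w N A B C D Q R G \<Phi>) \<longleftrightarrow> (\<exists>\<Phi>. cond_ii M x0 w N A B C D Q R G \<Phi>)"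
proof -
  have eq: "is_lfes M x0 w N A B C D Q R G \<Phi> \<longleftrightarrow> cond_ii M x0 w N A B C D Q R G \<Phi>"
    for \<Phi> :: "nat \<Rightarrow> real^'n^'m"
  proof -
    interpret L: lqp M x0 w N A C Q B D R G \<Phi>
      by (intro lqp.intro lqs.intro lqs_axioms.intro lqp_axioms.intro) (use assms in auto)
    show ?thesis by (rule L.equiv)
  qed
  show ?thesis using eq by blast
qed

end
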